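(* Let $\mathcal{H}$ be a finite-dimensional complex Hilbert space, let $\rho$ be a density operator on $\mathcal{H}$ and let $\sigma$ be a positive semi-definite operator on $\mathcal{H}$ with $\ker\sigma\subseteq\ker\rho$, and let $z\in\mathbb{R}\setminus\{0\}$. Then $$\lim_{\alpha\to1}\frac{\partial}{\partial z}\operatorname{Tr}\Big(\big(\sigma^{\frac{1-\alpha}{2z}}\rho^{\frac{\alpha}{z}}\sigma^{\frac{1-\alpha}{2z}}\big)^z\Big)=0.$$
   Context: Real powers and logarithms of positive semi-definite operators are evaluated on their support (negative powers are generalized inverses). The partial derivative is taken with respect to $z$ with $\alpha$ held fixed. *)

theory Defs
  imports "HOL-Analysis.Analysis"
begin

text \<open>Operators on a finite-dimensional complex Hilbert space are modelled as
  complex square matrices indexed by a finite type 'n (the space is complex^'n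
  with the standard inner product).\<close>

definition adj :: "complex^'n^'m \<Rightarrow> complex^'m^'n" where
  "adj A = (\<chi> i j. cnj (A $ j $ i))"

definition hermitian :: "complex^'n^'n \<Rightarrow> bool" where
  "hermitian A \<longleftrightarrow> adj A = A"

definition unitary :: "complex^'n^'n \<Rightarrow> bool" where
  "unitary U \<longleftrightarrow> adj U ** U = mat 1 \<and> U ** adj U = mat 1"

definition cinner :: "complex^'n \<Rightarrow> complex^'n \<Rightarrow> complex" where
  "cinner x y = (\<Sum>i\<in>UNIV. cnj (x $ i) * y $ i)"

definition psd :: "complex^'n^'n \<Rightarrow> bool" where
  "psd A \<longleftrightarrow> hermitian A \<and> (\<forall>x. 0 \<le> Re (cinner x (A *v x)))"

definition density_operator :: "complex^'n^'n \<Rightarrow> bool" where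
  "density_operator A \<longleftrightarrow> psd A \<and> trace A = 1"

definition ker :: "complex^'n^'n \<Rightarrow> (complex^'n) set" where
  "ker A = {x. A *v x = 0}"

definition diag_mat :: "('n \<Rightarrow> real) \<Rightarrow> complex^'n^'n" where
  "diag_mat d = (\<chi> i j. if i = j then complex_of_real (d i) else 0)"

text \<open>Real power of a positive semi-definite operator, evaluated on its support
  (eigenvalue 0 is mapped to 0, so negative powers are generalized inverses),
  defined via a spectral decomposition A = U diag(d) U*.\<close>

definition mpow :: "complex^'n^'n \<Rightarrow> real \<Rightarrow> complex^'n^'n" where
  "mpow A p = (let (U, d) = (SOME (U, d). unitary U \<and> A = U ** diag_mat d ** adj U)
     in U ** diag_mat (\<lambda>i. if d i > 0 then d i powr p else 0) ** adj U)"

end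

theory Submission
  imports Defs "HOL-Complex_Analysis.Complex_Analysis"
begin


definition cdiag :: "('n::finite \<Rightarrow> complex) \<Rightarrow> complex^'n^'n" where
  "cdiag f = (\<chi> i j. if i = j then f i else 0)"

lemma diag_mat_cdiag: "diag_mat d = cdiag (\<lambda>i. complex_of_real (d i))"
  by (simp add: diag_mat_def cdiag_def)

lemma adj_adj[simp]: "adj (adj A) = A"
  by (simp add: adj_def vec_eq_iff)

lemma adj_mult: "adj (A ** B) = adj B ** adj A"
  by (simp add: adj_def matrix_matrix_mult_def vec_eq_iff mult.commute)

lemma adj_add: "adj (A + B) = adj A + adj B"
  by (simp add: adj_def vec_eq_iff)

lemma adj_diff: "adj (A - B) = adj A - adj B"
  by (simp add: adj_def vec_eq_iff)

lemma adj_scaleR: "adj (c *\<^sub>R A) = c *\<^sub>R adj A"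
  by (simp add: adj_def vec_eq_iff)

lemma adj_mat1[simp]: "adj (mat 1 :: complex^'n^'n) = mat 1"
  by (simp add: adj_def vec_eq_iff mat_def)

lemma adj_cdiag: "adj (cdiag f) = cdiag (\<lambda>i. cnj (f i))"
  by (simp add: adj_def cdiag_def vec_eq_iff)

lemma if_mult0_left[simp]: "(if P then a else 0) * (b::complex) = (if P then a * b else 0)" by simp
lemma if_mult0_right[simp]: "(b::complex) * (if P then a else 0) = (if P then b * a else 0)" by simp

lemma cdiag_mult: "cdiag f ** cdiag g = cdiag (\<lambda>i. f i * g i)"
  by (simp add: cdiag_def matrix_matrix_mult_def vec_eq_iff sum.delta sum.delta')

lemma mult_cdiag_right: "A ** cdiag f = (\<chi> i j. A$i$j * f j)"
  by (simp add: cdiag_def matrix_matrix_mult_def vec_eq_iff sum.delta sum.delta')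

lemma mult_cdiag_left: "cdiag f ** A = (\<chi> i j. f i * A$i$j)"
  by (simp add: cdiag_def matrix_matrix_mult_def vec_eq_iff sum.delta sum.delta')

lemma trace_cdiag: "trace (cdiag f) = (\<Sum>i\<in>UNIV. f i)"
  by (simp add: cdiag_def trace_def)

lemma cdiag_add: "cdiag f + cdiag g = cdiag (\<lambda>i. f i + g i)"
  by (simp add: cdiag_def vec_eq_iff)

lemma cdiag_diff: "cdiag f - cdiag g = cdiag (\<lambda>i. f i - g i)"
  by (simp add: cdiag_def vec_eq_iff)

lemma cdiag_scaleR: "c *\<^sub>R cdiag f = cdiag (\<lambda>i. c *\<^sub>R f i)"
  by (simp add: cdiag_def vec_eq_iff)

lemma cdiag_one: "cdiag (\<lambda>i. 1) = mat 1"
  by (simp add: cdiag_def mat_def vec_eq_iff)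

lemma unitary_adj: "unitary U \<Longrightarrow> unitary (adj U)"
  by (simp add: unitary_def)

lemma unitary_mult_assoc1: "unitary U \<Longrightarrow> adj U ** (U ** A) = A"
  by (simp add: unitary_def matrix_mul_assoc)

lemma unitary_mult_assoc2: "unitary U \<Longrightarrow> U ** (adj U ** A) = A"
  by (simp add: unitary_def matrix_mul_assoc)

lemma trace_conj: "unitary U \<Longrightarrow> trace (U ** A ** adj U) = trace A"
  by (metis trace_mul_sym unitary_mult_assoc1 matrix_mul_assoc)

lemma cinner_add_right: "cinner x (y + z) = cinner x y + cinner x z"
  by (simp add: cinner_def distrib_left sum.distrib)

lemma cinner_diff_right: "cinner x (y - z) = cinner x y - cinner x z"
  by (simp add: cinner_def right_diff_distrib sum_subtractf)

lemma cinner_add_left: "cinner (x + y) z = cinner x z + cinner y z"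
  by (simp add: cinner_def distrib_right sum.distrib)

lemma cinner_scale_right: "cinner x (c *s y) = c * cinner x y"
  by (simp add: cinner_def sum_distrib_left mult.left_commute)

lemma cinner_scale_left: "cinner (c *s x) y = cnj c * cinner x y"
  by (simp add: cinner_def sum_distrib_left mult.assoc)

lemma cinner_scaleR_right: "cinner x (c *\<^sub>R y) = of_real c * cinner x y"
  unfolding cinner_def sum_distrib_left
  apply (rule sum.cong, simp)
  apply (simp only: vector_scaleR_component)
  apply (simp add: scaleR_conv_of_real mult_ac)
  done

lemma cinner_scaleR_left: "cinner (c *\<^sub>R x) y = of_real c * cinner x y"
  unfolding cinner_def sum_distrib_left
  apply (rule sum.cong, simp)
  apply (simp only: vector_scaleR_component)
  apply (simp add: scaleR_conv_of_real mult_ac)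
  done

lemma cinner_zero_right[simp]: "cinner x 0 = 0" by (simp add: cinner_def)
lemma cinner_zero_left[simp]: "cinner 0 x = 0" by (simp add: cinner_def)

lemma cinner_cnj: "cnj (cinner x y) = cinner y x"
  by (simp add: cinner_def mult.commute)

lemma cinner_adj: "cinner x (A *v y) = cinner (adj A *v x) y"
proof -
  have "cinner x (A *v y) = (\<Sum>i\<in>UNIV. \<Sum>j\<in>UNIV. cnj (x$i) * A$i$j * y$j)"
    by (simp add: cinner_def matrix_vector_mult_def sum_distrib_left mult.assoc)
  also have "\<dots> = (\<Sum>j\<in>UNIV. \<Sum>i\<in>UNIV. cnj (x$i) * A$i$j * y$j)"
    by (rule sum.swap)
  also have "\<dots> = cinner (adj A *v x) y"
    by (simp add: cinner_def adj_def matrix_vector_mult_def sum_distrib_right sum_distrib_left mult_ac)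
  finally show ?thesis .
qed

lemma cinner_self: "cinner x x = of_real ((norm x)^2)"
proof -
  have "cinner x x = (\<Sum>i\<in>UNIV. of_real ((cmod (x$i))^2))"
    unfolding cinner_def by (intro sum.cong refl) (metis complex_norm_square mult.commute)
  also have "\<dots> = of_real (\<Sum>i\<in>UNIV. (cmod (x$i))^2)"
    by simp
  also have "\<dots> = of_real ((norm x)^2)"
    by (simp add: norm_vec_def L2_set_def sum_nonneg)
  finally show ?thesis .
qed

lemma cinner_self_eq0: "cinner x x = 0 \<longleftrightarrow> x = 0"
  by (simp add: cinner_self)

lemma hermitian_cinner: "hermitian A \<Longrightarrow> cinner x (A *v y) = cinner (A *v x) y"
  by (simp add: hermitian_def cinner_adj)

lemma hermitian_real: "hermitian A \<Longrightarrow> Im (cinner x (A *v x)) = 0"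
proof -
  assume h: "hermitian A"
  have "cnj (cinner x (A *v x)) = cinner x (A *v x)"
    by (simp add: cinner_cnj hermitian_cinner[OF h])
  then show ?thesis by (metis Reals_cnj_iff complex_is_Real_iff)
qed



lemma scaleR_vs: "c *\<^sub>R (x::complex^'n) = of_real c *s x"
proof (subst vec_eq_iff, intro allI)
  fix i
  have "(c *\<^sub>R x)$i = c *\<^sub>R (x$i)" by simp
  also have "\<dots> = of_real c * x$i" by (rule scaleR_conv_of_real)
  finally show "(c *\<^sub>R x)$i = (of_real c *s x)$i" by simp
qed

lemma mv_scaleR: "A *v (c *\<^sub>R x) = c *\<^sub>R (A *v (x::complex^'n))"
  by (simp add: vec_eq_iff matrix_vector_mult_def scaleR_sum_right)

lemma mv_scale: "A *v (c *s x) = c *s (A *v (x::complex^'n))"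
  by (simp add: vec_eq_iff matrix_vector_mult_def sum_distrib_left mult.left_commute)

lemma continuous_cinner_right: "continuous_on S (\<lambda>x. cinner e x)"
  unfolding cinner_def by (intro continuous_intros)

lemma closed_orth: "closed {x. \<forall>e\<in>E. cinner e x = 0}"
proof -
  have "{x. \<forall>e\<in>E. cinner e x = 0} = (\<Inter>e\<in>E. (\<lambda>x. cinner e x) -` {0})" by auto
  also have "closed \<dots>"
  proof (intro closed_INT ballI continuous_closed_vimage)
    fix e x show "isCont (cinner e) x"
      using continuous_cinner_right[of UNIV e] by (simp add: continuous_on_eq_continuous_at)
  qed simp
  finally show ?thesis .
qed

lemma quad_zero:
  fixes p C :: real
  assumes "\<And>t. 2 * t * p \<le> t^2 * C"
  shows "p = 0"
proof (rule ccontr)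
  assume p: "p \<noteq> 0"
  define k where "k = \<bar>C\<bar> + 1"
  have kpos: "k > 0" by (simp add: k_def add_pos_nonneg)
  have i: "2 * (p/k) * p \<le> (p/k)^2 * C" by (rule assms)
  have a: "(p/k)^2 * C \<le> (p/k)^2 * k" by (rule mult_left_mono) (auto simp: k_def)
  have b: "(p/k)^2 * k = p * (p / k)" using kpos by (simp add: power2_eq_square)
  have c: "2 * (p/k) * p = 2 * (p * (p / k))" by simp
  have "p * (p / k) \<le> 0" using i a b c by linarith
  moreover have "p * (p / k) > 0" using p kpos
    by (metis divide_pos_pos divide_neg_pos linorder_neqE_linordered_idom mult_neg_neg mult_pos_pos)
  ultimately show False by linarith
qed

lemma Re_ofreal_mult: "Re (complex_of_real t * z) = t * Re z" by simp

lemma eigvec_exists: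
  fixes A :: "complex^'n^'n"
  assumes h: "hermitian A" and W: "W = {x. \<forall>e\<in>E. cinner e x = 0}"
    and inv: "\<And>x. x \<in> W \<Longrightarrow> A *v x \<in> W" and ne: "x0 \<in> W" "x0 \<noteq> 0"
  shows "\<exists>u\<in>W. norm u = 1 \<and> (\<exists>l::real. A *v u = of_real l *s u)"
proof -
  have Wadd: "x + y \<in> W" if "x \<in> W" "y \<in> W" for x y
    using that by (simp add: W cinner_add_right)
  have Wdiff: "x - y \<in> W" if "x \<in> W" "y \<in> W" for x y
    using that by (simp add: W cinner_diff_right)
  have WscR: "c *\<^sub>R x \<in> W" if "x \<in> W" for x c
    using that by (simp add: W cinner_scaleR_right)
  have Wsc: "c *s x \<in> W" if "x \<in> W" for x c
    using that by (simp add: W cinner_scale_right)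
  define K where "K = sphere 0 1 \<inter> W"
  have cK: "compact K" unfolding K_def W by (intro compact_Int_closed closed_orth) simp
  have x0K: "(1 / norm x0) *\<^sub>R x0 \<in> K" using ne by (auto simp: K_def WscR)
  define f where "f x = Re (cinner x (A *v x))" for x
  have cf: "continuous_on K f"
    unfolding f_def cinner_def matrix_vector_mult_def by (intro continuous_intros)
  obtain u where uK: "u \<in> K" and umax: "\<And>y. y \<in> K \<Longrightarrow> f y \<le> f u"
    using continuous_attains_sup[OF cK _ cf] x0K by blast
  define lam where "lam = f u"
  have uW: "u \<in> W" and nu: "norm u = 1" using uK by (auto simp: K_def)
  have uu: "cinner u u = 1" using nu by (simp add: cinner_self)
  have bound: "f x \<le> lam * (norm x)^2" if "x \<in> W" for x
  proof (cases "x = 0")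
    case True then show ?thesis by (simp add: f_def)
  next
    case False
    let ?y = "(1 / norm x) *\<^sub>R x"
    have "?y \<in> K" using False that by (auto simp: K_def WscR)
    hence "f ?y \<le> lam" using umax lam_def by blast
    moreover have "f ?y = f x / (norm x)^2"
      by (simp add: f_def mv_scaleR cinner_scaleR_left cinner_scaleR_right power2_eq_square)
    ultimately show ?thesis using False by (simp add: field_simps)
  qed
  define v where "v = A *v u - lam *\<^sub>R u"
  have vW: "v \<in> W" unfolding v_def using uW inv Wdiff WscR by blast
  have re0: "Re (cinner y v) = 0" if yW: "y \<in> W" for y
  proof -
    define p where "p = Re (cinner y v)"
    define C where "C = lam * Re (cinner y y) - Re (cinner y (A *v y))"
    have "2 * t * p \<le> t^2 * C" for t
    proof -
      have xW: "u + t *\<^sub>R y \<in> W" using uW yW Wadd WscR by blast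
      have "f (u + t *\<^sub>R y) \<le> lam * (norm (u + t *\<^sub>R y))^2" by (rule bound[OF xW])
      also have "(norm (u + t *\<^sub>R y))^2 = Re (cinner (u + t *\<^sub>R y) (u + t *\<^sub>R y))"
        by (simp add: cinner_self)
      finally have ineq: "f (u + t *\<^sub>R y) \<le> lam * Re (cinner (u + t *\<^sub>R y) (u + t *\<^sub>R y))" .
      have e1: "Re (cinner u (A *v y)) = Re (cinner y (A *v u))"
      proof -
        have "cinner u (A *v y) = cnj (cinner y (A *v u))" by (simp add: cinner_cnj hermitian_cinner[OF h])
        thus ?thesis by simp
      qed
      have e2: "Re (cinner u y) = Re (cinner y u)"
      proof -
        have "cinner u y = cnj (cinner y u)" by (simp add: cinner_cnj)
        thus ?thesis by simp
      qed
      have "f (u + t *\<^sub>R y) = lam + 2 * t * Re (cinner y (A *v u)) + t^2 * Re (cinner y (A *v y))"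
        by (simp add: f_def lam_def[symmetric] matrix_vector_right_distrib mv_scaleR cinner_add_left
            cinner_add_right cinner_scaleR_left cinner_scaleR_right e1 power2_eq_square algebra_simps)
          (simp add: lam_def f_def)
      moreover have "Re (cinner (u + t *\<^sub>R y) (u + t *\<^sub>R y)) = 1 + 2 * t * Re (cinner y u) + t^2 * Re (cinner y y)"
        by (simp add: cinner_add_left cinner_add_right cinner_scaleR_left cinner_scaleR_right uu e2
            power2_eq_square algebra_simps)
      moreover have "p = Re (cinner y (A *v u)) - lam * Re (cinner y u)"
        by (simp add: p_def v_def cinner_diff_right cinner_scaleR_right)
      ultimately show ?thesis using ineq
        by (simp add: p_def v_def cinner_diff_right cinner_scaleR_right C_def algebra_simps power2_eq_square)
    qed
    thus ?thesis using quad_zero p_def by blast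
  qed
  have inner0: "cinner y v = 0" if yW: "y \<in> W" for y
  proof -
    have "Re (cinner (\<i> *s y) v) = 0" by (rule re0) (rule Wsc[OF yW])
    hence "Im (cinner y v) = 0" by (simp add: cinner_scale_left)
    with re0[OF yW] show ?thesis by (simp add: complex_eq_iff)
  qed
  have "v = 0" using inner0[OF vW] by (simp add: cinner_self_eq0)
  hence "A *v u = of_real lam *s u"
    by (simp add: v_def scaleR_vs)
  thus ?thesis using uW nu by blast
qed



lemma onb_exists:
  fixes F :: "'n::finite set"
  assumes h: "hermitian (A::complex^'n^'n)" and "finite F"
  shows "\<exists>(v::'n \<Rightarrow> complex^'n) (l::'n\<Rightarrow>real). (\<forall>i\<in>F. \<forall>j\<in>F. cinner (v i) (v j) = (if i = j then 1 else 0)) \<and>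
               (\<forall>i\<in>F. A *v v i = of_real (l i) *s v i)"
  using assms(2)
proof (induction F rule: finite_induct)
  case empty
  then show ?case by auto
next
  case (insert j F)
  obtain v l where orth: "\<forall>i\<in>F. \<forall>k\<in>F. cinner (v i) (v k) = (if i = k then 1 else 0)"
    and eig: "\<forall>i\<in>F. A *v v i = of_real (l i) *s v i" using insert.IH by blast
  define W where "W = {x. \<forall>e\<in>v`F. cinner e x = 0}"
  have inv: "A *v x \<in> W" if "x \<in> W" for x
  proof -
    have "cinner (v i) (A *v x) = 0" if "i \<in> F" for i
    proof -
      have "cinner (v i) (A *v x) = cinner (A *v v i) x" by (rule hermitian_cinner[OF h])
      also have "\<dots> = cnj (of_real (l i)) * cinner (v i) x" using eig that by (simp add: cinner_scale_left)
      also have "\<dots> = 0" using \<open>x \<in> W\<close> that by (simp add: W_def)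
      finally show ?thesis .
    qed
    thus ?thesis by (auto simp: W_def)
  qed
  define M :: "complex^'n^'n" where "M = (\<chi> k i. if k \<in> F then cnj (v k $ i) else 0)"
  have Mx: "(M *v x)$k = (if k \<in> F then cinner (v k) x else 0)" for x k
    by (simp add: M_def matrix_vector_mult_def cinner_def)
  have "\<exists>x. x \<noteq> 0 \<and> M *v x = 0"
  proof (rule ccontr)
    assume "\<not> ?thesis"
    hence "\<forall>x. M *v x = 0 \<longrightarrow> x = 0" by blast
    then obtain B where "B ** M = mat 1" using matrix_left_invertible_ker by blast
    hence "M ** B = mat 1" using matrix_left_right_inverse by blast
    hence "(M ** B)$j$j = 1" by (simp add: mat_def)
    moreover have "(M ** B)$j$j = 0" using insert.hyps(2) by (simp add: matrix_matrix_mult_def M_def)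
    ultimately show False by simp
  qed
  then obtain x0 where x0: "x0 \<noteq> 0" "M *v x0 = 0" by blast
  have x0W: "x0 \<in> W"
  proof -
    have "cinner (v i) x0 = 0" if "i \<in> F" for i
      using Mx[of x0 i] x0(2) that by simp
    thus ?thesis by (auto simp: W_def)
  qed
  obtain u lam where uW: "u \<in> W" and nu: "norm u = 1" and ueig: "A *v u = of_real lam *s u"
    using eigvec_exists[OF h W_def inv x0W x0(1)] by blast
  have uu: "cinner u u = 1" using nu by (simp add: cinner_self)
  have vu: "cinner (v i) u = 0" if "i \<in> F" for i using uW that by (simp add: W_def)
  have uv: "cinner u (v i) = 0" if "i \<in> F" for i
    using vu[OF that] cinner_cnj[of "v i" u] by simp
  define v' where "v' = v(j := u)"
  define l' where "l' = l(j := lam)"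
  have "\<forall>i\<in>insert j F. \<forall>k\<in>insert j F. cinner (v' i) (v' k) = (if i = k then 1 else 0)"
    using orth vu uv uu insert.hyps(2) by (auto simp: v'_def)
  moreover have "\<forall>i\<in>insert j F. A *v v' i = of_real (l' i) *s v' i"
    using eig ueig insert.hyps(2) by (auto simp: v'_def l'_def)
  ultimately show ?case by blast
qed

theorem spectral:
  assumes h: "hermitian (A::complex^'n^'n)"
  shows "\<exists>U d. unitary U \<and> A = U ** diag_mat d ** adj U"
proof -
  obtain v :: "'n \<Rightarrow> complex^'n" and l :: "'n \<Rightarrow> real" where orth: "\<forall>i j. cinner (v i) (v j) = (if i = j then 1 else 0)"
    and eig: "\<forall>i. A *v v i = of_real (l i) *s v i" using onb_exists[OF h, of UNIV] by (auto simp: finite)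
  define U :: "complex^'n^'n" where "U = (\<chi> i j. v j $ i)"
  have UU: "adj U ** U = mat 1"
    using orth by (simp add: vec_eq_iff adj_def matrix_matrix_mult_def cinner_def mat_def U_def)
  hence UU2: "U ** adj U = mat 1" using matrix_left_right_inverse by blast
  have AU: "A ** U = U ** diag_mat l"
  proof -
    have "(A ** U)$i$k = (A *v v k)$i" for i k
      by (simp add: matrix_matrix_mult_def matrix_vector_mult_def U_def)
    thus ?thesis using eig
      by (simp add: vec_eq_iff diag_mat_cdiag mult_cdiag_right U_def mult.commute)
  qed
  have "A = A ** (U ** adj U)" by (simp add: UU2)
  also have "\<dots> = U ** diag_mat l ** adj U" by (simp add: matrix_mul_assoc AU)
  finally show ?thesis using UU UU2 unfolding unitary_def by blast
qed

lemma diag_decomp_nonneg: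
  fixes A :: "complex^'n^'n" and i :: 'n
  assumes p: "psd A" and u: "unitary U" and A: "A = U ** diag_mat d ** adj U"
  shows "d i \<ge> 0"
proof -
  define e :: "complex^'n" where "e = axis i 1"
  define x where "x = U *v e"
  have "cinner x (A *v x) = cinner (adj U *v x) (diag_mat d *v (adj U *v x))"
    by (simp add: A cinner_adj matrix_vector_mul_assoc[symmetric])
  also have "adj U *v x = e" using u
    by (simp add: x_def matrix_vector_mul_assoc unitary_def)
  also have "cinner e (diag_mat d *v e) = of_real (d i)"
    by (simp add: cinner_def e_def axis_def diag_mat_def matrix_vector_mult_def)
  finally have "cinner x (A *v x) = of_real (d i)" .
  with p show ?thesis unfolding psd_def by (metis Re_complex_of_real)
qed



definition dec :: "complex^'n^'n \<Rightarrow> (complex^'n^'n) \<times> ('n \<Rightarrow> real)" where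
  "dec A = (SOME (U, d). unitary U \<and> A = U ** diag_mat d ** adj U)"

abbreviation dU where "dU A \<equiv> fst (dec A)"
abbreviation dd where "dd A \<equiv> snd (dec A)"

lemma dec:
  assumes "hermitian A"
  shows "unitary (dU A)" "A = dU A ** diag_mat (dd A) ** adj (dU A)"
proof -
  obtain U d where "unitary U \<and> A = U ** diag_mat d ** adj U" using spectral[OF assms] by blast
  hence "\<exists>x. (\<lambda>(U, d). unitary U \<and> A = U ** diag_mat d ** adj U) x" by blast
  hence "(\<lambda>(U, d). unitary U \<and> A = U ** diag_mat d ** adj U) (dec A)"
    unfolding dec_def by (rule someI_ex)
  thus "unitary (dU A)" "A = dU A ** diag_mat (dd A) ** adj (dU A)"
    by (simp_all add: split_beta)
qed

lemma psd_hermitian: "psd A \<Longrightarrow> hermitian A" by (simp add: psd_def)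

lemma dd_nonneg: "psd A \<Longrightarrow> dd A i \<ge> 0"
  using dec[OF psd_hermitian] diag_decomp_nonneg by metis

lemma mm_add_r: "(A + B) ** C = A ** C + B ** (C::'a::semiring_1^'n^'m)"
  by (simp add: matrix_matrix_mult_def vec_eq_iff sum.distrib distrib_right)
lemma mm_diff_l: "(A::'a::ring_1^'n^'m) ** (B - C) = A ** B - A ** C"
  by (simp add: matrix_matrix_mult_def vec_eq_iff sum_subtractf right_diff_distrib)
lemma mm_diff_r: "((A::'a::ring_1^'n^'m) - B) ** C = A ** C - B ** C"
  by (simp add: matrix_matrix_mult_def vec_eq_iff sum_subtractf left_diff_distrib)
lemma mm_scaleR_l: "(c *\<^sub>R (A::complex^'n^'m)) ** B = c *\<^sub>R (A ** B)"
  by (simp add: matrix_matrix_mult_def vec_eq_iff scaleR_sum_right)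
lemma mm_scaleR_r: "(A::complex^'n^'m) ** (c *\<^sub>R B) = c *\<^sub>R (A ** B)"
  by (simp add: matrix_matrix_mult_def vec_eq_iff scaleR_sum_right)

definition fc :: "complex^'n^'n \<Rightarrow> (real \<Rightarrow> complex) \<Rightarrow> complex^'n^'n" where
  "fc A f = dU A ** cdiag (\<lambda>i. f (dd A i)) ** adj (dU A)"

lemma mpow_fc: "mpow A p = fc A (\<lambda>x. if x > 0 then of_real (x powr p) else 0)"
  by (simp add: mpow_def fc_def dec_def split_beta diag_mat_cdiag Let_def if_distrib cong: if_cong)

lemma fc_self: "hermitian A \<Longrightarrow> fc A of_real = A"
  using dec(2)[of A] by (simp add: fc_def diag_mat_cdiag)

lemma fc_mult: "hermitian A \<Longrightarrow> fc A f ** fc A g = fc A (\<lambda>x. f x * g x)"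
proof -
  assume h: "hermitian A"
  have u: "unitary (dU A)" by (rule dec(1)[OF h])
  have "fc A f ** fc A g = dU A ** cdiag (\<lambda>i. f (dd A i)) ** (adj (dU A) ** dU A) ** cdiag (\<lambda>i. g (dd A i)) ** adj (dU A)"
    by (simp add: fc_def matrix_mul_assoc)
  also have "\<dots> = dU A ** (cdiag (\<lambda>i. f (dd A i)) ** cdiag (\<lambda>i. g (dd A i))) ** adj (dU A)"
    using u by (simp add: unitary_def matrix_mul_assoc)
  also have "\<dots> = fc A (\<lambda>x. f x * g x)"
    by (simp add: fc_def cdiag_mult)
  finally show ?thesis .
qed

lemma fc_adj: "adj (fc A f) = fc A (\<lambda>x. cnj (f x))"
  by (simp add: fc_def adj_mult adj_cdiag matrix_mul_assoc)

lemma fc_add: "fc A f + fc A g = fc A (\<lambda>x. f x + g x)"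
  by (simp add: fc_def cdiag_add[symmetric] matrix_add_ldistrib mm_add_r)

lemma fc_diff: "fc A f - fc A g = fc A (\<lambda>x. f x - g x)"
  by (simp add: fc_def cdiag_diff[symmetric] mm_diff_l mm_diff_r)

lemma fc_scaleR: "c *\<^sub>R fc A f = fc A (\<lambda>x. c *\<^sub>R f x)"
  by (simp add: fc_def cdiag_scaleR[symmetric] mm_scaleR_l mm_scaleR_r)

lemma fc_one: "hermitian A \<Longrightarrow> fc A (\<lambda>x. 1) = mat 1"
  using dec(1)[of A] by (simp add: fc_def cdiag_one unitary_def)

lemma fc_trace: "hermitian A \<Longrightarrow> trace (fc A f) = (\<Sum>i\<in>UNIV. f (dd A i))"
  using dec(1)[of A] by (simp add: fc_def trace_conj trace_cdiag)

lemma fc_cong: "(\<And>i. f (dd A i) = g (dd A i)) \<Longrightarrow> fc A f = fc A g"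
  by (simp add: fc_def)

lemma fc_hermitian: "(\<And>x. cnj (f x) = f x) \<Longrightarrow> hermitian (fc A f)"
  by (simp add: hermitian_def fc_adj)

definition cp :: "complex^'n^'n \<Rightarrow> complex \<Rightarrow> complex^'n^'n" where
  "cp A p = fc A (\<lambda>x. if x > 0 then exp (p * of_real (ln x)) else 0)"

lemma mpow_cp: "mpow A p = cp A (of_real p)"
  unfolding mpow_fc cp_def
  by (rule fc_cong) (simp add: powr_def exp_of_real[symmetric])

lemma cp_mult: "hermitian A \<Longrightarrow> cp A p ** cp A q = cp A (p + q)"
  unfolding cp_def by (simp add: fc_mult) (rule fc_cong, simp add: exp_add[symmetric] distrib_right)

lemma cp_one: "psd A \<Longrightarrow> cp A 1 = A"
proof -
  assume p: "psd A"
  have "cp A 1 = fc A of_real"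
    unfolding cp_def
  proof (rule fc_cong)
    fix i
    have "dd A i \<ge> 0" by (rule dd_nonneg[OF p])
    thus "(if 0 < dd A i then exp (1 * complex_of_real (ln (dd A i))) else 0) = complex_of_real (dd A i)"
      by (auto simp: exp_of_real)
  qed
  thus ?thesis using fc_self[OF psd_hermitian[OF p]] by simp
qed

lemma cp_real_hermitian: "hermitian (cp A (of_real p))"
  unfolding cp_def
proof (rule fc_hermitian)
  fix x
  have "exp (of_real p * of_real (ln x) :: complex) = of_real (exp (p * ln x))" by (metis exp_of_real of_real_mult)
  thus "cnj (if 0 < x then exp (complex_of_real p * complex_of_real (ln x)) else 0) =
    (if 0 < x then exp (complex_of_real p * complex_of_real (ln x)) else 0)" by simp
qed

lemma cp0_hermitian: "hermitian (cp A 0)"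
  using cp_real_hermitian[of A 0] by simp

lemma hermitian_adj: "hermitian A \<Longrightarrow> adj A = A" by (simp add: hermitian_def)

lemma kernel_proj:
  assumes ps: "psd \<sigma>" and pr: "psd \<rho>" and k: "ker \<sigma> \<subseteq> ker \<rho>"
  shows "\<rho> ** cp \<sigma> 0 = \<rho>" "cp \<sigma> 0 ** \<rho> = \<rho>"
proof -
  have hs: "hermitian \<sigma>" and hr: "hermitian \<rho>" using ps pr by (auto simp: psd_def)
  define U where "U = dU \<sigma>"
  define s where "s = dd \<sigma>"
  have u: "unitary U" using dec(1)[OF hs] U_def by simp
  have sU: "\<sigma> ** U = U ** diag_mat s"
  proof -
    have "\<sigma> ** U = U ** diag_mat s ** (adj U ** U)"
      using dec(2)[OF hs] by (metis U_def s_def matrix_mul_assoc)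
    thus ?thesis using u by (simp add: unitary_def)
  qed
  define K where "K = fc \<sigma> (\<lambda>x. if x > 0 then 0 else 1)"
  have KP: "K = mat 1 - cp \<sigma> 0"
    unfolding K_def cp_def fc_one[OF hs, symmetric] fc_diff by (rule fc_cong) simp
  have col: "\<rho> ** U ** cdiag (\<lambda>i. if s i > 0 then 0 else 1) = 0"
  proof -
    have "(\<rho> ** U)$a$j = 0" if "\<not> s j > 0" for a j
    proof -
      have s0: "s j = 0" using dd_nonneg[OF ps, of j] that s_def by simp
      define c where "c = (\<chi> i. U$i$j)"
      have "(\<sigma> *v c)$i = (\<sigma> ** U)$i$j" for i
        by (simp add: c_def matrix_vector_mult_def matrix_matrix_mult_def)
      hence "\<sigma> *v c = 0" using sU s0
        by (simp add: vec_eq_iff diag_mat_cdiag mult_cdiag_right)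
      hence "c \<in> ker \<rho>" using k by (auto simp: ker_def)
      hence "\<rho> *v c = 0" by (simp add: ker_def)
      moreover have "(\<rho> *v c)$a = (\<rho> ** U)$a$j"
        by (simp add: c_def matrix_vector_mult_def matrix_matrix_mult_def)
      ultimately show ?thesis by simp
    qed
    thus ?thesis by (simp add: vec_eq_iff mult_cdiag_right)
  qed
  have "\<rho> ** K = 0"
    unfolding K_def fc_def U_def[symmetric] s_def[symmetric]
    by (simp add: matrix_mul_assoc col)
  hence "\<rho> ** mat 1 - \<rho> ** cp \<sigma> 0 = 0" by (simp add: KP mm_diff_l)
  thus A: "\<rho> ** cp \<sigma> 0 = \<rho>" by simp
  have "adj (\<rho> ** cp \<sigma> 0) = adj \<rho>" by (simp add: A)
  thus "cp \<sigma> 0 ** \<rho> = \<rho>" 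
    by (simp add: adj_mult hermitian_adj[OF hr] hermitian_adj[OF cp0_hermitian])
qed

lemma kernel_proj_cp:
  assumes ps: "psd \<sigma>" and pr: "psd \<rho>" and k: "ker \<sigma> \<subseteq> ker \<rho>"
  shows "cp \<sigma> 0 ** cp \<rho> p = cp \<rho> p" "cp \<rho> p ** cp \<sigma> 0 = cp \<rho> p"
proof -
  have hr: "hermitian \<rho>" using pr by (simp add: psd_def)
  have e1: "cp \<rho> p = \<rho> ** cp \<rho> (p - 1)"
    using cp_mult[OF hr, of 1 "p - 1"] cp_one[OF pr] by simp
  have e2: "cp \<rho> p = cp \<rho> (p - 1) ** \<rho>"
    using cp_mult[OF hr, of "p - 1" 1] cp_one[OF pr] by simp
  show "cp \<sigma> 0 ** cp \<rho> p = cp \<rho> p"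
    by (subst (1 2) e1) (simp add: matrix_mul_assoc kernel_proj[OF assms])
  show "cp \<rho> p ** cp \<sigma> 0 = cp \<rho> p"
    by (subst (1 2) e2) (simp add: matrix_mul_assoc[symmetric] kernel_proj[OF assms])
qed

lemma unitary_cancel1: "unitary U \<Longrightarrow> X ** adj U ** U = X"
  unfolding unitary_def by (metis matrix_mul_assoc matrix_mul_rid)
lemma unitary_cancel2: "unitary U \<Longrightarrow> X ** U ** adj U = X"
  unfolding unitary_def by (metis matrix_mul_assoc matrix_mul_rid)

primrec mp :: "complex^'n^'n \<Rightarrow> nat \<Rightarrow> complex^'n^'n" where
  "mp A 0 = mat 1"
| "mp A (Suc n) = A ** mp A n"

lemma mp_commute:
  assumes c: "A ** B = B ** A" shows "mp A n ** B = B ** mp A n"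
proof (induction n)
  case 0 then show ?case by simp
next
  case (Suc n)
  have "mp A (Suc n) ** B = A ** (mp A n ** B)" by (simp add: matrix_mul_assoc)
  also have "\<dots> = (A ** B) ** mp A n" by (simp only: Suc matrix_mul_assoc)
  also have "\<dots> = B ** mp A (Suc n)" by (simp only: c matrix_mul_assoc mp.simps)
  finally show ?case .
qed

lemma mp_comm: "A ** mp A n = mp A n ** A"
  using mp_commute[of A A n] by simp

lemma mp_conj:
  assumes u: "unitary U" shows "mp (U ** A ** adj U) n = U ** mp A n ** adj U"
proof (induction n)
  case 0 then show ?case using u by (simp add: unitary_def)
next
  case (Suc n)
  have "mp (U ** A ** adj U) (Suc n) = U ** A ** (adj U ** U) ** mp A n ** adj U"
    by (simp only: mp.simps Suc matrix_mul_assoc)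
  also have "\<dots> = U ** mp A (Suc n) ** adj U"
    using u by (simp only: unitary_def matrix_mul_rid mp.simps matrix_mul_assoc)
  finally show ?case .
qed

lemma mp_fc: "hermitian A \<Longrightarrow> mp (fc A f) n = fc A (\<lambda>x. f x ^ n)"
  by (induction n) (simp_all add: fc_one fc_mult)

lemma trace_mp_cyclic: "trace (mp (A ** B) (Suc n)) = trace (mp (B ** A) (Suc n))"
proof -
  have e: "mp (A ** B) (Suc k) = A ** mp (B ** A) k ** B" for k
  proof (induction k)
    case 0 then show ?case by simp
  next
    case (Suc k)
    have "mp (A ** B) (Suc (Suc k)) = A ** B ** (A ** mp (B ** A) k ** B)"
      by (simp only: mp.simps(2)[of "A ** B" "Suc k"] Suc)
    also have "\<dots> = A ** mp (B ** A) (Suc k) ** B" by (simp only: mp.simps matrix_mul_assoc)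
    finally show ?case .
  qed
  have "trace (mp (A ** B) (Suc n)) = trace (A ** (mp (B ** A) n ** B))"
    by (simp only: e matrix_mul_assoc)
  also have "\<dots> = trace ((mp (B ** A) n ** B) ** A)" by (rule trace_mul_sym)
  also have "\<dots> = trace (B ** A ** mp (B ** A) n)"
    using mp_comm[of "B ** A" n] by (metis matrix_mul_assoc)
  also have "B ** A ** mp (B ** A) n = mp (B ** A) (Suc n)" by simp
  finally show ?thesis .
qed



definition rs :: "complex^'n^'n \<Rightarrow> real" where
  "rs M = Max (range (\<lambda>i. \<Sum>j\<in>UNIV. cmod (M$i$j)))"

lemma rs_ge: "(\<Sum>j\<in>UNIV. cmod (M$i$j)) \<le> rs M"
  unfolding rs_def by (rule Max_ge) auto

lemma rs_le: "(\<And>i. (\<Sum>j\<in>UNIV. cmod (M$i$j)) \<le> B) \<Longrightarrow> rs M \<le> B"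
  unfolding rs_def by (subst Max_le_iff) auto

lemma rs_nonneg: "0 \<le> rs M"
  using rs_ge[of M] by (meson order_trans sum_nonneg norm_ge_zero)

lemma rs_mult: "rs (A ** B) \<le> rs A * rs B"
proof (rule rs_le)
  fix i
  have "(\<Sum>j\<in>UNIV. cmod ((A ** B)$i$j)) \<le> (\<Sum>j\<in>UNIV. \<Sum>k\<in>UNIV. cmod (A$i$k) * cmod (B$k$j))"
    unfolding matrix_matrix_mult_def
    by (intro sum_mono) (auto intro: order_trans[OF norm_sum] simp: norm_mult)
  also have "\<dots> = (\<Sum>k\<in>UNIV. cmod (A$i$k) * (\<Sum>j\<in>UNIV. cmod (B$k$j)))"
    by (subst sum.swap) (simp add: sum_distrib_left)
  also have "\<dots> \<le> (\<Sum>k\<in>UNIV. cmod (A$i$k) * rs B)"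
    by (intro sum_mono mult_left_mono rs_ge) auto
  also have "\<dots> = (\<Sum>k\<in>UNIV. cmod (A$i$k)) * rs B" by (simp add: sum_distrib_right)
  also have "\<dots> \<le> rs A * rs B" by (intro mult_right_mono rs_ge rs_nonneg)
  finally show "(\<Sum>j\<in>UNIV. cmod ((A ** B)$i$j)) \<le> rs A * rs B" .
qed

lemma rs_add: "rs (A + B) \<le> rs A + rs B"
proof (rule rs_le)
  fix i
  have "(\<Sum>j\<in>UNIV. cmod ((A + B)$i$j)) \<le> (\<Sum>j\<in>UNIV. cmod (A$i$j) + cmod (B$i$j))"
    by (intro sum_mono) (simp add: norm_triangle_ineq)
  also have "\<dots> \<le> rs A + rs B" by (simp add: sum.distrib add_mono rs_ge)
  finally show "(\<Sum>j\<in>UNIV. cmod ((A + B)$i$j)) \<le> rs A + rs B" .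
qed

lemma rs_diff: "rs (A - B) \<le> rs A + rs B"
proof (rule rs_le)
  fix i
  have "(\<Sum>j\<in>UNIV. cmod ((A - B)$i$j)) \<le> (\<Sum>j\<in>UNIV. cmod (A$i$j) + cmod (B$i$j))"
    by (intro sum_mono) (simp add: norm_triangle_ineq4)
  also have "\<dots> \<le> rs A + rs B" by (simp add: sum.distrib add_mono rs_ge)
  finally show "(\<Sum>j\<in>UNIV. cmod ((A - B)$i$j)) \<le> rs A + rs B" .
qed

lemma rs_scaleR: "rs (c *\<^sub>R A) \<le> \<bar>c\<bar> * rs A"
proof (rule rs_le)
  fix i
  have "(\<Sum>j\<in>UNIV. cmod ((c *\<^sub>R A)$i$j)) = \<bar>c\<bar> * (\<Sum>j\<in>UNIV. cmod (A$i$j))"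
    by (simp add: sum_distrib_left)
  also have "\<dots> \<le> \<bar>c\<bar> * rs A" by (intro mult_left_mono rs_ge) auto
  finally show "(\<Sum>j\<in>UNIV. cmod ((c *\<^sub>R A)$i$j)) \<le> \<bar>c\<bar> * rs A" .
qed

lemma rs_entries: "(\<And>i j. cmod (M$i$j) \<le> B) \<Longrightarrow> rs M \<le> of_nat CARD('n) * B"
  for M :: "complex^'n^'n"
proof (rule rs_le)
  fix i assume "\<And>i j. cmod (M$i$j) \<le> B"
  hence "(\<Sum>j\<in>UNIV. cmod (M$i$j)) \<le> (\<Sum>j\<in>(UNIV::'n set). B)" by (intro sum_mono) auto
  thus "(\<Sum>j\<in>UNIV. cmod (M$i$j)) \<le> of_nat CARD('n) * B" by simp
qed

lemma rs_cdiag: "(\<And>i. cmod (f i) \<le> B) \<Longrightarrow> rs (cdiag f) \<le> B"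
proof (rule rs_le)
  fix i assume "\<And>i. cmod (f i) \<le> B"
  moreover have "(\<Sum>j\<in>UNIV. cmod (cdiag f $ i $ j)) = cmod (f i)"
    by (simp add: cdiag_def if_distrib[of cmod] cong: if_cong)
  ultimately show "(\<Sum>j\<in>UNIV. cmod (cdiag f $ i $ j)) \<le> B" by simp
qed

lemma rs_mat1: "rs (mat 1 :: complex^'n^'n) \<le> 1"
  using rs_cdiag[of "\<lambda>i. 1" 1] by (simp add: cdiag_one)

lemma rs_mp: "rs (mp A n) \<le> rs A ^ n"
proof (induction n)
  case 0 then show ?case using rs_mat1 by simp
next
  case (Suc n)
  have "rs (mp A (Suc n)) \<le> rs A * rs (mp A n)" using rs_mult by simp
  also have "\<dots> \<le> rs A * rs A ^ n" by (intro mult_left_mono Suc rs_nonneg)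
  finally show ?case by simp
qed

lemma trace_rs: "cmod (trace M) \<le> of_nat CARD('n) * rs M" for M :: "complex^'n^'n"
proof -
  have "cmod (trace M) \<le> (\<Sum>i\<in>UNIV. cmod (M$i$i))" unfolding trace_def by (rule norm_sum)
  also have "\<dots> \<le> (\<Sum>i\<in>(UNIV::'n set). rs M)"
  proof (intro sum_mono)
    fix i
    have "cmod (M$i$i) \<le> (\<Sum>j\<in>UNIV. cmod (M$i$j))"
      by (rule member_le_sum) auto
    thus "cmod (M$i$i) \<le> rs M" using rs_ge[of M i] by linarith
  qed
  finally show ?thesis by simp
qed

definition mcont :: "'a filter \<Rightarrow> ('a::t2_space \<Rightarrow> complex^'n^'n) \<Rightarrow> bool" where
  "mcont F A \<longleftrightarrow> (\<forall>i j. continuous F (\<lambda>x. A x $ i $ j))"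

lemma mcont_const: "mcont F (\<lambda>x. M)" by (simp add: mcont_def)
lemma mcont_mult: "mcont F A \<Longrightarrow> mcont F B \<Longrightarrow> mcont F (\<lambda>x. A x ** B x)"
  unfolding mcont_def matrix_matrix_mult_def by (simp, intro allI continuous_sum continuous_mult) auto
lemma mcont_add: "mcont F A \<Longrightarrow> mcont F B \<Longrightarrow> mcont F (\<lambda>x. A x + B x)"
  unfolding mcont_def by (simp, intro allI continuous_add) auto
lemma mcont_diff: "mcont F A \<Longrightarrow> mcont F B \<Longrightarrow> mcont F (\<lambda>x. A x - B x)"
  unfolding mcont_def by (simp, intro allI continuous_diff) auto
lemma mcont_scaleR: "mcont F A \<Longrightarrow> mcont F (\<lambda>x. c *\<^sub>R A x)"
  unfolding mcont_def by (simp, intro allI continuous_scaleR continuous_const) auto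
lemma mcont_cdiag: "(\<And>i. continuous F (\<lambda>x. f x i)) \<Longrightarrow> mcont F (\<lambda>x. cdiag (f x))"
  unfolding mcont_def cdiag_def by (simp, intro allI, case_tac "i = j") auto
lemma mcont_mp: "mcont F A \<Longrightarrow> mcont F (\<lambda>x. mp (A x) n)"
  by (induction n) (auto intro: mcont_const mcont_mult)
lemma mcont_trace: "mcont F A \<Longrightarrow> continuous F (\<lambda>x. trace (A x))"
  unfolding mcont_def trace_def by (intro continuous_sum) auto

definition mholo :: "complex set \<Rightarrow> (complex \<Rightarrow> complex^'n^'n) \<Rightarrow> bool" where
  "mholo S A \<longleftrightarrow> (\<forall>i j. (\<lambda>x. A x $ i $ j) holomorphic_on S)"

lemma mholo_const: "mholo S (\<lambda>x. M)" by (simp add: mholo_def)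
lemma mholo_mult: "mholo S A \<Longrightarrow> mholo S B \<Longrightarrow> mholo S (\<lambda>x. A x ** B x)"
  unfolding mholo_def matrix_matrix_mult_def by (auto intro!: holomorphic_intros)
lemma mholo_add: "mholo S A \<Longrightarrow> mholo S B \<Longrightarrow> mholo S (\<lambda>x. A x + B x)"
  unfolding mholo_def by (auto intro!: holomorphic_intros)
lemma mholo_diff: "mholo S A \<Longrightarrow> mholo S B \<Longrightarrow> mholo S (\<lambda>x. A x - B x)"
  unfolding mholo_def by (auto intro!: holomorphic_intros)
lemma mholo_scaleR: "mholo S A \<Longrightarrow> mholo S (\<lambda>x. c *\<^sub>R A x)"
  unfolding mholo_def by (auto simp: scaleR_conv_of_real intro!: holomorphic_intros)
lemma mholo_cdiag: "(\<And>i. (\<lambda>x. f x i) holomorphic_on S) \<Longrightarrow> mholo S (\<lambda>x. cdiag (f x))"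
  unfolding mholo_def cdiag_def by (simp, intro allI, case_tac "i = j") auto
lemma mholo_mp: "mholo S A \<Longrightarrow> mholo S (\<lambda>x. mp (A x) n)"
  by (induction n) (auto intro: mholo_const mholo_mult)
lemma mholo_trace: "mholo S A \<Longrightarrow> (\<lambda>x. trace (A x)) holomorphic_on S"
  unfolding mholo_def trace_def by (auto intro!: holomorphic_intros)



lemma unitary_sandwich:
  assumes u: "unitary U"
  shows "adj U ** ((U ** A ** adj U) ** B ** (U ** C ** adj U)) ** U = A ** (adj U ** B ** U) ** C"
proof -
  have "adj U ** ((U ** A ** adj U) ** B ** (U ** C ** adj U)) ** U
      = (adj U ** U) ** A ** (adj U ** B ** U) ** C ** (adj U ** U)"
    by (simp only: matrix_mul_assoc)
  also have "\<dots> = A ** (adj U ** B ** U) ** C" using u by (simp add: unitary_def)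
  finally show ?thesis .
qed

lemma unitary_conj_back: "unitary U \<Longrightarrow> adj U ** (U ** A ** adj U) ** U = A"
proof -
  assume u: "unitary U"
  have "adj U ** (U ** A ** adj U) ** U = (adj U ** U) ** A ** (adj U ** U)"
    by (simp only: matrix_mul_assoc)
  thus ?thesis using u by (simp add: unitary_def)
qed

lemma unitary_conj_fwd: "unitary U \<Longrightarrow> U ** (adj U ** A ** U) ** adj U = A"
  using unitary_conj_back[OF unitary_adj] by simp

locale qset =
  fixes \<sigma> \<rho> :: "complex^'n^'n" and z :: real
  assumes dens: "density_operator \<rho>" and ps: "psd \<sigma>" and kr: "ker \<sigma> \<subseteq> ker \<rho>" and z0: "z \<noteq> 0"
begin

lemma pr: "psd \<rho>" using dens by (simp add: density_operator_def)
lemma hr: "hermitian \<rho>" using pr by (simp add: psd_def)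
lemma hs: "hermitian \<sigma>" using ps by (simp add: psd_def)

abbreviation "Ur \<equiv> dU \<rho>"
abbreviation "r \<equiv> dd \<rho>"

lemma Uru: "unitary Ur" by (rule dec(1)[OF hr])
lemma r_nonneg: "r i \<ge> 0" by (rule dd_nonneg[OF pr])

lemma sum_r: "(\<Sum>i\<in>UNIV. r i) = 1"
proof -
  have "trace \<rho> = 1" using dens by (simp add: density_operator_def)
  moreover have "trace \<rho> = (\<Sum>i\<in>UNIV. complex_of_real (r i))"
    using fc_trace[OF hr, of complex_of_real] fc_self[OF hr] by simp
  ultimately have "complex_of_real (\<Sum>i\<in>UNIV. r i) = 1" by simp
  thus ?thesis using of_real_eq_1_iff by blast
qed

lemma r_pos_ex: "\<exists>i. r i > 0"
proof (rule ccontr)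
  assume "\<not> ?thesis"
  hence "\<And>i. r i = 0" using r_nonneg by (metis less_eq_real_def)
  thus False using sum_r by simp
qed

definition Sg :: "complex \<Rightarrow> complex^'n^'n" where "Sg p = cp \<sigma> p"
definition Rh :: "complex \<Rightarrow> complex^'n^'n" where "Rh p = cp \<rho> p"
definition Dg :: "complex \<Rightarrow> complex^'n^'n" where
  "Dg p = cdiag (\<lambda>i. if r i > 0 then exp (p * of_real (ln (r i))) else 0)"

lemma Rh_Dg: "Rh p = Ur ** Dg p ** adj Ur"
  by (simp add: Rh_def cp_def fc_def Dg_def)

lemma Dg_Rh: "adj Ur ** Rh p ** Ur = Dg p"
  using unitary_conj_back[OF Uru] Rh_Dg by simp

lemma Dg0: "Dg 0 = cdiag (\<lambda>i. if r i > 0 then 1 else 0)"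
  unfolding Dg_def by (intro arg_cong[where f=cdiag] ext) simp

definition aa :: "real \<Rightarrow> complex \<Rightarrow> complex" where "aa \<alpha> \<zeta> = of_real (1 - \<alpha>) / (2 * \<zeta>)"
definition bb :: "real \<Rightarrow> complex \<Rightarrow> complex" where "bb \<alpha> \<zeta> = of_real \<alpha> / (2 * \<zeta>)"
definition Y :: "real \<Rightarrow> complex \<Rightarrow> complex^'n^'n" where
  "Y \<alpha> \<zeta> = Rh (bb \<alpha> \<zeta>) ** Sg (2 * aa \<alpha> \<zeta>) ** Rh (bb \<alpha> \<zeta>)"
definition Mx :: real where "Mx = Max ((\<lambda>i. r i powr (1 / z)) ` {i. r i > 0})"
definition cc :: real where "cc = 1 / Mx"
definition T :: "real \<Rightarrow> complex \<Rightarrow> complex^'n^'n" where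
  "T \<alpha> \<zeta> = cc *\<^sub>R Y \<alpha> \<zeta> - Rh 0"
definition tau :: "nat \<Rightarrow> real \<Rightarrow> complex \<Rightarrow> complex" where
  "tau n \<alpha> \<zeta> = trace (Rh 0 ** mp (T \<alpha> \<zeta>) n)"
definition Tp :: "real \<Rightarrow> complex \<Rightarrow> complex^'n^'n" where
  "Tp \<alpha> \<zeta> = adj Ur ** T \<alpha> \<zeta> ** Ur"
definition G :: "complex \<Rightarrow> complex^'n^'n" where
  "G a = adj Ur ** Sg (2 * a) ** Ur"

lemma Mx_pos: "Mx > 0"
proof -
  obtain i where i: "r i > 0" using r_pos_ex by blast
  have "r i powr (1 / z) \<le> Mx" unfolding Mx_def by (rule Max_ge) (use i in auto)
  moreover have "r i powr (1 / z) > 0" using i by simp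
  ultimately show ?thesis by linarith
qed

lemma cc_pos: "cc > 0" using Mx_pos by (simp add: cc_def)

lemma tau_conj: "tau n \<alpha> \<zeta> = trace (Dg 0 ** mp (Tp \<alpha> \<zeta>) n)"
proof -
  have Te: "T \<alpha> \<zeta> = Ur ** Tp \<alpha> \<zeta> ** adj Ur"
    unfolding Tp_def using unitary_conj_fwd[OF Uru] by simp
  have "Rh 0 ** mp (T \<alpha> \<zeta>) n = Ur ** Dg 0 ** (adj Ur ** Ur) ** mp (Tp \<alpha> \<zeta>) n ** adj Ur"
    by (simp only: Te mp_conj[OF Uru] Rh_Dg matrix_mul_assoc)
  also have "\<dots> = Ur ** (Dg 0 ** mp (Tp \<alpha> \<zeta>) n) ** adj Ur"
    using Uru by (simp add: unitary_def matrix_mul_assoc)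
  finally show ?thesis by (simp add: tau_def trace_conj[OF Uru])
qed

lemma tau_bound: "cmod (tau n \<alpha> \<zeta>) \<le> of_nat CARD('n) * rs (Tp \<alpha> \<zeta>) ^ n"
proof -
  have "rs (Dg 0) \<le> 1" unfolding Dg0 by (rule rs_cdiag) simp
  hence "rs (Dg 0 ** mp (Tp \<alpha> \<zeta>) n) \<le> rs (Tp \<alpha> \<zeta>) ^ n"
    using rs_mult[of "Dg 0" "mp (Tp \<alpha> \<zeta>) n"] rs_mp[of "Tp \<alpha> \<zeta>" n] rs_nonneg[of "mp (Tp \<alpha> \<zeta>) n"]
    by (smt (verit) mult_left_le_one_le mult_right_mono rs_nonneg)
  thus ?thesis unfolding tau_conj
    by (meson order_trans trace_rs mult_left_mono of_nat_0_le_iff)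
qed

lemma Tp_formula: "Tp \<alpha> \<zeta> = cc *\<^sub>R (Dg (bb \<alpha> \<zeta>) ** G (aa \<alpha> \<zeta>) ** Dg (bb \<alpha> \<zeta>)) - Dg 0"
proof -
  have "Tp \<alpha> \<zeta> = cc *\<^sub>R (adj Ur ** Y \<alpha> \<zeta> ** Ur) - adj Ur ** Rh 0 ** Ur"
    by (simp add: Tp_def T_def mm_diff_l mm_diff_r mm_scaleR_l mm_scaleR_r)
  also have "adj Ur ** Y \<alpha> \<zeta> ** Ur = Dg (bb \<alpha> \<zeta>) ** G (aa \<alpha> \<zeta>) ** Dg (bb \<alpha> \<zeta>)"
    unfolding Y_def G_def Rh_Dg by (rule unitary_sandwich[OF Uru])
  finally show ?thesis by (simp add: Dg_Rh)
qed

lemma Sg0_Rh: "Sg 0 ** Rh p = Rh p" and Rh_Sg0: "Rh p ** Sg 0 = Rh p"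
  unfolding Sg_def Rh_def using kernel_proj_cp[OF ps pr kr] by auto

lemma Rh_mult: "Rh p ** Rh q = Rh (p + q)"
  unfolding Rh_def by (rule cp_mult[OF hr])

lemma aa1: "aa 1 \<zeta> = 0" by (simp add: aa_def)

lemma Y1: fixes \<zeta> :: complex shows "\<zeta> \<noteq> 0 \<Longrightarrow> Y 1 \<zeta> = Rh (1 / \<zeta>)"
proof -
  assume "\<zeta> \<noteq> 0"
  have "Y 1 \<zeta> = Rh (bb 1 \<zeta>) ** Rh (bb 1 \<zeta>)"
    by (simp add: Y_def aa1 Sg0_Rh matrix_mul_assoc[symmetric])
  also have "\<dots> = Rh (1 / \<zeta>)" by (simp add: Rh_mult bb_def)
  finally show ?thesis .
qed

lemma Tp1: fixes \<zeta> :: complex shows "\<zeta> \<noteq> 0 \<Longrightarrow> Tp 1 \<zeta> = cdiag (\<lambda>i. if r i > 0 then cc * exp (of_real (ln (r i)) / \<zeta>) - 1 else 0)"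
proof -
  assume z: "\<zeta> \<noteq> 0"
  have "Tp 1 \<zeta> = cc *\<^sub>R (adj Ur ** Rh (1/\<zeta>) ** Ur) - adj Ur ** Rh 0 ** Ur"
    using z by (simp add: Tp_def T_def Y1 mm_diff_l mm_diff_r mm_scaleR_l mm_scaleR_r)
  also have "\<dots> = cc *\<^sub>R Dg (1/\<zeta>) - Dg 0" by (simp add: Dg_Rh)
  also have "\<dots> = cdiag (\<lambda>i. if r i > 0 then cc * exp (of_real (ln (r i)) / \<zeta>) - 1 else 0)"
    unfolding Dg_def cdiag_scaleR cdiag_diff by (rule arg_cong[where f=cdiag]) (auto simp: scaleR_conv_of_real)
  finally show ?thesis .
qed

lemma rs_Tp1: "rs (Tp 1 (of_real z)) < 1"
proof -
  define m where "m i = (if r i > 0 then complex_of_real cc * exp (complex_of_real (ln (r i)) / complex_of_real z) - 1 else (0::complex))" for i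
  have mb: "cmod (m i) < 1" for i
  proof (cases "r i > 0")
    case True
    have e00: "r i powr (1 / z) = exp ((1 / z) * ln (r i))" using True by (simp add: powr_def)
    have e0: "r i powr (1 / z) = exp (ln (r i) / z)" unfolding e00 by simp
    have e: "exp (complex_of_real (ln (r i)) / complex_of_real z) = complex_of_real (r i powr (1 / z))"
      unfolding e0 by (metis of_real_divide exp_of_real)
    have le: "r i powr (1 / z) \<le> Mx" unfolding Mx_def by (rule Max_ge) (use True in auto)
    have gt: "r i powr (1 / z) > 0" using True by simp
    have "m i = complex_of_real (cc * r i powr (1 / z) - 1)" using True by (simp only: m_def e if_True of_real_mult of_real_diff of_real_1)
    hence "cmod (m i) = \<bar>cc * r i powr (1 / z) - 1\<bar>" by (simp only: norm_of_real)
    moreover have "cc * r i powr (1 / z) \<le> 1" using le Mx_pos by (simp add: cc_def field_simps)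
    moreover have "cc * r i powr (1 / z) > 0" using gt cc_pos by simp
    ultimately show ?thesis by simp
  qed (simp add: m_def)
  have zc: "complex_of_real z \<noteq> 0" using z0 by simp
  have "Tp 1 (of_real z) = cdiag m" unfolding Tp1[OF zc]
    by (rule arg_cong[where f=cdiag]) (rule ext, simp only: m_def)
  hence "rs (Tp 1 (of_real z)) \<le> Max (range (\<lambda>i. cmod (m i)))"
    by (simp add: rs_cdiag)
  also have "\<dots> < 1" using mb by (simp add: Max_less_iff)
  finally show ?thesis .
qed

end


context qset
begin

abbreviation "Us \<equiv> dU \<sigma>"
abbreviation "s \<equiv> dd \<sigma>"

lemma G_expand: "G a = adj Ur ** Us ** cdiag (\<lambda>k. if s k > 0 then exp (2 * a * of_real (ln (s k))) else 0) ** adj Us ** Ur"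
  by (simp add: G_def Sg_def cp_def fc_def matrix_mul_assoc)

lemma mcont_Dg: "continuous F f \<Longrightarrow> mcont F (\<lambda>x. Dg (f x))"
  unfolding Dg_def
  apply (rule mcont_cdiag)
  subgoal for i by (cases "r i > 0") (auto intro!: continuous_intros)
  done

lemma mcont_G: "continuous F f \<Longrightarrow> mcont F (\<lambda>x. G (f x))"
  unfolding G_expand
  apply (intro mcont_mult mcont_const)
  apply (rule mcont_cdiag)
  subgoal for i by (cases "s i > 0") (auto intro!: continuous_intros)
  done

lemma cont_aa: "snd p \<noteq> 0 \<Longrightarrow> continuous (at p) (\<lambda>p. aa (fst p) (snd p))"
  unfolding aa_def by (intro continuous_intros) auto

lemma cont_bb: "snd p \<noteq> 0 \<Longrightarrow> continuous (at p) (\<lambda>p. bb (fst p) (snd p))"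
  unfolding bb_def by (intro continuous_intros) auto

lemma mcont_Tp: "snd p \<noteq> 0 \<Longrightarrow> mcont (at p) (\<lambda>p. Tp (fst p) (snd p))"
  unfolding Tp_formula
  by (intro mcont_diff mcont_scaleR mcont_mult mcont_Dg mcont_G mcont_const cont_aa cont_bb)

lemma cont_tau: "snd p \<noteq> 0 \<Longrightarrow> continuous (at p) (\<lambda>p. tau n (fst p) (snd p))"
  unfolding tau_conj by (intro mcont_trace mcont_mult mcont_const mcont_mp mcont_Tp)

lemma mholo_Dg: "f holomorphic_on S \<Longrightarrow> mholo S (\<lambda>x. Dg (f x))"
  unfolding Dg_def
  apply (rule mholo_cdiag)
  subgoal for i by (cases "r i > 0") (auto intro!: holomorphic_intros)
  done

lemma mholo_G: "f holomorphic_on S \<Longrightarrow> mholo S (\<lambda>x. G (f x))"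
  unfolding G_expand
  apply (intro mholo_mult mholo_const)
  apply (rule mholo_cdiag)
  subgoal for i by (cases "s i > 0") (auto intro!: holomorphic_intros)
  done

lemma holo_aa: "0 \<notin> S \<Longrightarrow> (\<lambda>\<zeta>. aa \<alpha> \<zeta>) holomorphic_on S"
  unfolding aa_def by (intro holomorphic_intros) auto

lemma holo_bb: "0 \<notin> S \<Longrightarrow> (\<lambda>\<zeta>. bb \<alpha> \<zeta>) holomorphic_on S"
  unfolding bb_def by (intro holomorphic_intros) auto

lemma mholo_Tp: "0 \<notin> S \<Longrightarrow> mholo S (\<lambda>\<zeta>. Tp \<alpha> \<zeta>)"
  unfolding Tp_formula
  by (intro mholo_diff mholo_scaleR mholo_mult mholo_Dg mholo_G mholo_const holo_aa holo_bb)

lemma holo_tau: "0 \<notin> S \<Longrightarrow> (\<lambda>\<zeta>. tau n \<alpha> \<zeta>) holomorphic_on S"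
  unfolding tau_conj by (intro mholo_trace mholo_mult mholo_const mholo_mp mholo_Tp)

lemma nbhd: "\<exists>d q. 0 < d \<and> 0 < q \<and> q < 1 \<and> d < \<bar>z\<bar> \<and>
   (\<forall>\<alpha> \<zeta>. \<bar>\<alpha> - 1\<bar> < d \<longrightarrow> cmod (\<zeta> - of_real z) < d \<longrightarrow> rs (Tp \<alpha> \<zeta>) \<le> q)"
proof -
  define p0 :: "real \<times> complex" where "p0 = (1, of_real z)"
  define F where "F p = Tp (fst p) (snd p)" for p :: "real \<times> complex"
  have mc: "mcont (at p0) F" unfolding F_def p0_def by (rule mcont_Tp) (simp add: z0)
  define q0 where "q0 = rs (F p0)"
  have q0: "q0 < 1" "0 \<le> q0" using rs_Tp1 rs_nonneg by (auto simp: q0_def F_def p0_def)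
  define N where "N = real CARD('n)"
  have Npos: "N > 0" by (simp add: N_def)
  define e where "e = (1 - q0) / (2 * N)"
  have epos: "e > 0" using q0 Npos by (simp add: e_def)
  have "\<forall>\<^sub>F p in at p0. \<forall>i j. dist (F p $ i $ j) (F p0 $ i $ j) < e"
  proof (intro eventually_all_finite)
    fix i j
    have "continuous (at p0) (\<lambda>p. F p $ i $ j)" using mc by (simp add: mcont_def)
    hence "((\<lambda>p. F p $ i $ j) \<longlongrightarrow> F p0 $ i $ j) (at p0)" by (simp add: continuous_within)
    thus "\<forall>\<^sub>F p in at p0. dist (F p $ i $ j) (F p0 $ i $ j) < e" using epos by (rule tendstoD)
  qed
  then obtain d0 where d0: "d0 > 0" and d0P: "\<And>p. p \<noteq> p0 \<Longrightarrow> dist p p0 < d0 \<Longrightarrow> \<forall>i j. dist (F p $ i $ j) (F p0 $ i $ j) < e"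
    unfolding eventually_at by auto
  define d where "d = min (d0 / 2) (\<bar>z\<bar> / 2)"
  have dpos: "d > 0" using d0 z0 by (simp add: d_def)
  have dz: "d < \<bar>z\<bar>" using z0 by (simp add: d_def)
  define q where "q = (1 + q0) / 2"
  have "rs (Tp \<alpha> \<zeta>) \<le> q" if a: "\<bar>\<alpha> - 1\<bar> < d" and b: "cmod (\<zeta> - of_real z) < d" for \<alpha> \<zeta>
  proof -
    define p where "p = (\<alpha>, \<zeta>)"
    have "dist p p0 = sqrt ((dist \<alpha> 1)^2 + (dist \<zeta> (of_real z))^2)"
      by (simp add: p_def p0_def dist_Pair_Pair)
    also have "\<dots> \<le> dist \<alpha> 1 + dist \<zeta> (of_real z)" by (rule sqrt_sum_squares_le_sum) auto
    also have "\<dots> < d0" using a b by (simp add: dist_norm d_def)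
    finally have dp: "dist p p0 < d0" .
    have ent: "cmod ((F p - F p0) $ i $ j) \<le> e" for i j
    proof (cases "p = p0")
      case True then show ?thesis using epos by simp
    next
      case False
      from d0P[OF False dp] show ?thesis by (simp add: dist_norm less_imp_le)
    qed
    have "rs (F p) = rs (F p0 + (F p - F p0))" by simp
    also have "\<dots> \<le> q0 + rs (F p - F p0)" unfolding q0_def by (rule rs_add)
    also have "rs (F p - F p0) \<le> N * e" unfolding N_def by (rule rs_entries) (rule ent)
    also have "q0 + N * e = q" using Npos by (simp add: e_def q_def field_simps)
    finally show ?thesis by (simp add: F_def p_def)
  qed
  moreover have "0 < q" "q < 1" using q0 by (auto simp: q_def)
  ultimately show ?thesis using dpos dz by blast
qed

definition del :: real where "del = fst (SOME (d, q). 0 < d \<and> 0 < q \<and> q < 1 \<and> d < \<bar>z\<bar> \<and>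
   (\<forall>\<alpha> \<zeta>. \<bar>\<alpha> - 1\<bar> < d \<longrightarrow> cmod (\<zeta> - of_real z) < d \<longrightarrow> rs (Tp \<alpha> \<zeta>) \<le> q)) / 2"
definition qq :: real where "qq = snd (SOME (d, q). 0 < d \<and> 0 < q \<and> q < 1 \<and> d < \<bar>z\<bar> \<and>
   (\<forall>\<alpha> \<zeta>. \<bar>\<alpha> - 1\<bar> < d \<longrightarrow> cmod (\<zeta> - of_real z) < d \<longrightarrow> rs (Tp \<alpha> \<zeta>) \<le> q))"

lemma del_qq: "0 < del" "0 < qq" "qq < 1" "2 * del < \<bar>z\<bar>"
  "\<And>\<alpha> \<zeta>. \<bar>\<alpha> - 1\<bar> \<le> del \<Longrightarrow> cmod (\<zeta> - of_real z) \<le> del \<Longrightarrow> rs (Tp \<alpha> \<zeta>) \<le> qq"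
proof -
  let ?P = "\<lambda>(d, q). 0 < d \<and> 0 < q \<and> q < 1 \<and> d < \<bar>z\<bar> \<and>
   (\<forall>\<alpha> \<zeta>. \<bar>\<alpha> - 1\<bar> < d \<longrightarrow> cmod (\<zeta> - of_real z) < d \<longrightarrow> rs (Tp \<alpha> \<zeta>) \<le> q)"
  have "\<exists>x. ?P x" using nbhd by auto
  hence P: "?P (SOME x. ?P x)" by (rule someI_ex)
  obtain D Q where DQ: "(SOME x. ?P x) = (D, Q)" by (cases "SOME x. ?P x") auto
  have PP: "0 < D" "0 < Q" "Q < 1" "D < \<bar>z\<bar>"
    "\<And>\<alpha> \<zeta>. \<bar>\<alpha> - 1\<bar> < D \<Longrightarrow> cmod (\<zeta> - of_real z) < D \<Longrightarrow> rs (Tp \<alpha> \<zeta>) \<le> Q"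
    using P unfolding DQ by auto
  have dD: "del = D / 2" unfolding del_def DQ by simp
  have qQ: "qq = Q" unfolding qq_def DQ by simp
  show "0 < del" "0 < qq" "qq < 1" "2 * del < \<bar>z\<bar>" using PP dD qQ by auto
  show "\<And>\<alpha> \<zeta>. \<bar>\<alpha> - 1\<bar> \<le> del \<Longrightarrow> cmod (\<zeta> - of_real z) \<le> del \<Longrightarrow> rs (Tp \<alpha> \<zeta>) \<le> qq"
    using PP(5) PP(1) dD qQ by fastforce
qed

end


lemma gbin_bound:
  fixes \<zeta> :: complex and R :: real
  assumes "cmod \<zeta> \<le> R"
  shows "cmod (\<zeta> gchoose n) \<le> \<bar>(- R) gchoose n\<bar>"
proof -
  have "cmod (\<zeta> gchoose n) = (\<Prod>i=0..<n. cmod (\<zeta> - of_nat i)) / fact n"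
    by (simp add: gbinomial_prod_rev norm_divide prod_norm)
  also have "\<dots> \<le> (\<Prod>i=0..<n. R + of_nat i) / fact n"
  proof (intro divide_right_mono prod_mono conjI)
    fix i
    have "cmod (\<zeta> - of_nat i) \<le> cmod \<zeta> + cmod (of_nat i :: complex)" by (rule norm_triangle_ineq4)
    thus "cmod (\<zeta> - of_nat i) \<le> R + of_nat i" using assms by simp
  qed auto
  also have "\<dots> = \<bar>(- R) gchoose n\<bar>"
  proof -
    have "R \<ge> 0" using assms norm_ge_zero order_trans by blast
    hence "\<bar>\<Prod>i=0..<n. - R - of_nat i\<bar> = (\<Prod>i=0..<n. R + of_nat i)"
      by (simp add: abs_prod) (intro prod.cong refl, simp)
    thus ?thesis by (simp add: gbinomial_prod_rev)
  qed
  finally show ?thesis .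
qed

lemma cont_gchoose: "continuous F f \<Longrightarrow> continuous F (\<lambda>x. (f x :: complex) gchoose n)"
  unfolding gbinomial_prod_rev by (intro continuous_divide continuous_prod continuous_diff continuous_const) auto

lemma holo_gchoose: "(\<lambda>x. (x :: complex) gchoose n) holomorphic_on S"
  unfolding gbinomial_prod_rev by (intro holomorphic_intros) auto

context qset
begin

definition Om :: "(real \<times> complex) set" where "Om = cball 1 del \<times> cball (of_real z) del"
definition RR :: real where "RR = \<bar>z\<bar> + del"

lemma Om_iff: "(\<alpha>, \<zeta>) \<in> Om \<longleftrightarrow> \<bar>\<alpha> - 1\<bar> \<le> del \<and> cmod (\<zeta> - of_real z) \<le> del"
  by (simp add: Om_def dist_norm norm_minus_commute abs_minus_commute)

lemma compact_Om: "compact Om" unfolding Om_def by (intro compact_Times compact_cball)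

lemma Om_props:
  assumes "(\<alpha>, \<zeta>) \<in> Om"
  shows "rs (Tp \<alpha> \<zeta>) \<le> qq" "\<zeta> \<noteq> 0" "cmod \<zeta> \<le> RR"
proof -
  have a: "\<bar>\<alpha> - 1\<bar> \<le> del" and b: "cmod (\<zeta> - of_real z) \<le> del" using assms by (auto simp: Om_iff)
  show "rs (Tp \<alpha> \<zeta>) \<le> qq" using del_qq(5)[OF a b] .
  have "cmod \<zeta> \<le> cmod (\<zeta> - of_real z) + cmod (of_real z :: complex)"
    using norm_triangle_ineq[of "\<zeta> - of_real z" "of_real z"] by simp
  thus "cmod \<zeta> \<le> RR" using b by (simp add: RR_def)
  have "cmod (of_real z :: complex) \<le> cmod (of_real z - \<zeta>) + cmod \<zeta>"
    using norm_triangle_ineq[of "of_real z - \<zeta>" "\<zeta>"] by simp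
  hence "\<bar>z\<bar> \<le> del + cmod \<zeta>" using b by (simp add: norm_minus_commute)
  thus "\<zeta> \<noteq> 0" using del_qq(1,4) by auto
qed

definition Mj :: "nat \<Rightarrow> real" where
  "Mj n = real CARD('n) * (\<bar>(- RR) gchoose n\<bar> * qq ^ n)"

lemma summable_Mj: "summable Mj"
proof -
  have "ereal (norm qq) < conv_radius (\<lambda>n. (- RR) gchoose n)"
    using del_qq(2,3) by (simp add: conv_radius_gchoose one_ereal_def)
  from abs_summable_in_conv_radius[OF this]
  have "summable (\<lambda>n. \<bar>(- RR) gchoose n\<bar> * qq ^ n)"
    using del_qq(2) by (simp add: abs_mult power_abs)
  thus ?thesis unfolding Mj_def by (rule summable_mult)
qed

lemma term_bound:
  assumes "(\<alpha>, \<zeta>) \<in> Om"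
  shows "cmod ((\<zeta> gchoose n) * tau n \<alpha> \<zeta>) \<le> Mj n"
proof -
  have "cmod (tau n \<alpha> \<zeta>) \<le> real CARD('n) * rs (Tp \<alpha> \<zeta>) ^ n" by (rule tau_bound)
  also have "\<dots> \<le> real CARD('n) * qq ^ n"
    using Om_props(1)[OF assms] rs_nonneg by (intro mult_left_mono power_mono) auto
  finally have t: "cmod (tau n \<alpha> \<zeta>) \<le> real CARD('n) * qq ^ n" .
  have g: "cmod (\<zeta> gchoose n) \<le> \<bar>(- RR) gchoose n\<bar>" by (rule gbin_bound[OF Om_props(3)[OF assms]])
  have "cmod ((\<zeta> gchoose n) * tau n \<alpha> \<zeta>) \<le> \<bar>(- RR) gchoose n\<bar> * (real CARD('n) * qq ^ n)"
    unfolding norm_mult by (rule mult_mono[OF g t]) auto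
  thus ?thesis by (simp add: Mj_def mult_ac)
qed

definition PsiS :: "real \<Rightarrow> complex \<Rightarrow> complex" where
  "PsiS \<alpha> \<zeta> = (\<Sum>n. (\<zeta> gchoose n) * tau n \<alpha> \<zeta>)"
definition Psi :: "real \<Rightarrow> complex \<Rightarrow> complex" where
  "Psi \<alpha> \<zeta> = exp (- \<zeta> * of_real (ln cc)) * PsiS \<alpha> \<zeta>"

lemma ulim_Om: "uniform_limit Om (\<lambda>n p. \<Sum>i<n. (snd p gchoose i) * tau i (fst p) (snd p))
    (\<lambda>p. PsiS (fst p) (snd p)) sequentially"
  unfolding PsiS_def
  by (rule Weierstrass_m_test[OF _ summable_Mj]) (metis prod.collapse term_bound)

lemma cont_PsiS: "continuous_on Om (\<lambda>p. PsiS (fst p) (snd p))"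
proof (rule uniform_limit_theorem[OF _ ulim_Om])
  show "\<forall>\<^sub>F n in sequentially. continuous_on Om (\<lambda>p. \<Sum>i<n. (snd p gchoose i) * tau i (fst p) (snd p))"
  proof (intro always_eventually allI continuous_at_imp_continuous_on ballI)
    fix n and p :: "real \<times> complex" assume "p \<in> Om"
    hence nz: "snd p \<noteq> 0" using Om_props(2) by (metis prod.collapse)
    show "isCont (\<lambda>p. \<Sum>i<n. (snd p gchoose i) * tau i (fst p) (snd p)) p"
      by (intro continuous_sum continuous_mult cont_gchoose continuous_snd continuous_ident cont_tau nz)
  qed
qed simp

lemma cont_Psi: "continuous_on Om (\<lambda>p. Psi (fst p) (snd p))"
  unfolding Psi_def by (intro continuous_intros cont_PsiS)

lemma holo_PsiS:
  assumes a: "\<bar>\<alpha> - 1\<bar> \<le> del"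
  shows "(\<lambda>\<zeta>. PsiS \<alpha> \<zeta>) holomorphic_on ball (of_real z) del"
    "continuous_on (cball (of_real z) del) (\<lambda>\<zeta>. PsiS \<alpha> \<zeta>)"
proof -
  have inOm: "(\<alpha>, \<zeta>) \<in> Om" if "\<zeta> \<in> cball (of_real z) del" for \<zeta>
    using that a by (simp add: Om_iff dist_norm norm_minus_commute)
  have ul: "uniform_limit (cball (of_real z) del) (\<lambda>n \<zeta>. \<Sum>i<n. (\<zeta> gchoose i) * tau i \<alpha> \<zeta>)
      (\<lambda>\<zeta>. PsiS \<alpha> \<zeta>) sequentially"
    unfolding PsiS_def by (rule Weierstrass_m_test[OF _ summable_Mj]) (rule term_bound[OF inOm])
  define S where "S = ball (of_real z :: complex) \<bar>z\<bar>"
  have S0: "0 \<notin> S" by (simp add: S_def dist_norm)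
  have sub: "cball (of_real z) del \<subseteq> S" using del_qq(1,4) by (auto simp: S_def)
  have hS: "(\<lambda>\<zeta>. \<Sum>i<n. (\<zeta> gchoose i) * tau i \<alpha> \<zeta>) holomorphic_on S" for n
    by (intro holomorphic_intros holo_gchoose holo_tau S0)
  have ev: "\<forall>\<^sub>F n in sequentially. continuous_on (cball (of_real z) del) (\<lambda>\<zeta>. \<Sum>i<n. (\<zeta> gchoose i) * tau i \<alpha> \<zeta>) \<and>
      (\<lambda>\<zeta>. \<Sum>i<n. (\<zeta> gchoose i) * tau i \<alpha> \<zeta>) holomorphic_on ball (of_real z) del"
  proof (intro always_eventually allI conjI)
    fix n
    have sub2: "ball (of_real z) del \<subseteq> S" using sub ball_subset_cball by blast
    show "continuous_on (cball (of_real z) del) (\<lambda>\<zeta>. \<Sum>i<n. (\<zeta> gchoose i) * tau i \<alpha> \<zeta>)"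
      by (rule holomorphic_on_imp_continuous_on, rule holomorphic_on_subset[OF hS sub])
    show "(\<lambda>\<zeta>. \<Sum>i<n. (\<zeta> gchoose i) * tau i \<alpha> \<zeta>) holomorphic_on ball (of_real z) del"
      by (rule holomorphic_on_subset[OF hS sub2])
  qed
  from holomorphic_uniform_limit[OF ev ul]
  show "(\<lambda>\<zeta>. PsiS \<alpha> \<zeta>) holomorphic_on ball (of_real z) del"
    "continuous_on (cball (of_real z) del) (\<lambda>\<zeta>. PsiS \<alpha> \<zeta>)" by auto
qed

lemma holo_Psi:
  assumes a: "\<bar>\<alpha> - 1\<bar> \<le> del"
  shows "(\<lambda>\<zeta>. Psi \<alpha> \<zeta>) holomorphic_on ball (of_real z) del"
    "continuous_on (cball (of_real z) del) (\<lambda>\<zeta>. Psi \<alpha> \<zeta>)"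
  unfolding Psi_def using holo_PsiS[OF a]
  by (auto intro!: holomorphic_intros continuous_intros)

end


lemma trace_scaleR: "trace (c *\<^sub>R (A::complex^'n^'n)) = of_real c * trace A"
proof -
  have "trace (c *\<^sub>R A) = (\<Sum>i\<in>UNIV. c *\<^sub>R (A$i$i))"
    unfolding trace_def by (simp only: vector_scaleR_component)
  also have "\<dots> = of_real c * trace A"
    unfolding trace_def by (simp add: scaleR_conv_of_real sum_distrib_left)
  finally show ?thesis .
qed

lemma sum_pos_restrict:
  fixes g :: "'n::finite \<Rightarrow> complex"
  assumes "\<And>i. \<not> d i > 0 \<Longrightarrow> g i = 0"
  shows "(\<Sum>i\<in>UNIV. g i) = (\<Sum>i\<in>{i. d i > (0::real)}. g i)"
  using assms by (intro sum.mono_neutral_right) auto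

context qset
begin

lemma ident:
  fixes w :: real and d :: "'n \<Rightarrow> real"
  assumes Om: "(\<alpha>, complex_of_real w) \<in> Om" and dnn: "\<And>i. d i \<ge> 0"
    and pw: "\<And>k. trace (mp (Y \<alpha> (of_real w)) (Suc k)) = (\<Sum>i\<in>UNIV. complex_of_real (d i) ^ Suc k)"
  shows "(\<Sum>i\<in>UNIV. if d i > 0 then complex_of_real (d i powr w) else 0) = Psi \<alpha> (of_real w)"
proof -
  define \<zeta> where "\<zeta> = complex_of_real w"
  define Yv where "Yv = Y \<alpha> \<zeta>"
  define P where "P = Rh 0"
  define Tv where "Tv = T \<alpha> \<zeta>"
  have Tv_def': "Tv = cc *\<^sub>R Yv - P" by (simp add: Tv_def T_def Yv_def P_def)
  have PY: "P ** Yv = Yv" unfolding P_def Yv_def Y_def by (simp add: matrix_mul_assoc Rh_mult)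
  have YP: "Yv ** P = Yv" unfolding P_def Yv_def Y_def by (simp add: matrix_mul_assoc[symmetric] Rh_mult)
  have PP: "P ** P = P" unfolding P_def by (simp add: Rh_mult)
  define I where "I = {i. d i > 0}"
  define mu where "mu i = cc * d i - 1" for i
  define E where "E k n = (\<Sum>i\<in>I. complex_of_real (d i) ^ k * complex_of_real (mu i) ^ n)" for k n
  define \<delta> where "\<delta> = trace P - of_nat (card I)"
  define S where "S k n = trace (mp Yv k ** P ** mp Tv n)" for k n
  have mpYP: "mp Yv (Suc k) ** P = mp Yv (Suc k)" for k
    using mp_comm[of Yv k] by (simp add: matrix_mul_assoc[symmetric] YP)
  have SE: "S k n = E k n + (if k = 0 then (-1)^n * \<delta> else 0)" for k n
  proof (induction n arbitrary: k)
    case 0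
    show ?case
    proof (cases k)
      case 0
      have "E 0 0 = of_nat (card I)" by (simp add: E_def)
      thus ?thesis using 0 by (simp add: S_def \<delta>_def)
    next
      case (Suc k')
      have "S k 0 = trace (mp Yv (Suc k'))" by (simp only: S_def Suc mp.simps(1) matrix_mul_rid mpYP)
      also have "\<dots> = (\<Sum>i\<in>UNIV. complex_of_real (d i) ^ Suc k')" unfolding Yv_def \<zeta>_def by (rule pw)
      also have "\<dots> = (\<Sum>i\<in>I. complex_of_real (d i) ^ Suc k')"
        unfolding I_def by (rule sum_pos_restrict) (use dnn in \<open>force simp: less_eq_real_def\<close>)
      also have "\<dots> = E k 0" by (simp add: E_def Suc)
      finally show ?thesis using Suc by simp
    qed
  next
    case (Suc n)
    have "mp Yv k ** P ** mp Tv (Suc n) = cc *\<^sub>R (mp Yv k ** (P ** Yv) ** mp Tv n) - mp Yv k ** (P ** P) ** mp Tv n"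
      by (simp add: Tv_def' mm_diff_l mm_diff_r mm_scaleR_l mm_scaleR_r matrix_mul_assoc)
    also have "mp Yv k ** (P ** Yv) ** mp Tv n = mp Yv (Suc k) ** P ** mp Tv n"
    proof -
      have e1: "mp Yv (Suc k) = mp Yv k ** Yv" using mp_comm[of Yv k] by simp
      have e2: "mp Yv k ** Yv ** P = mp Yv k ** Yv" using mpYP[of k] unfolding e1 .
      show ?thesis unfolding e1 PY e2 ..
    qed
    finally have "S k (Suc n) = of_real cc * S (Suc k) n - S k n"
      by (simp add: S_def PP trace_sub trace_scaleR)
    also have "\<dots> = of_real cc * E (Suc k) n - (E k n + (if k = 0 then (-1)^n * \<delta> else 0))"
      using Suc.IH by simp
    finally have L0: "S k (Suc n) = of_real cc * E (Suc k) n - (E k n + (if k = 0 then (-1)^n * \<delta> else 0))" .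
    hence L: "S k (Suc n) = (of_real cc * E (Suc k) n - E k n) - (if k = 0 then (-1)^n * \<delta> else 0)"
      by (simp only: diff_diff_eq)
    have M: "of_real cc * E (Suc k) n - E k n = E k (Suc n)"
      unfolding E_def mu_def by (simp add: sum_distrib_left sum_subtractf[symmetric] algebra_simps)
    show ?case unfolding L M by (cases "k = 0") simp_all
  qed
  have tauE: "tau n \<alpha> \<zeta> = E 0 n + (-1)^n * \<delta>" for n
    using SE[of 0 n] by (simp add: S_def tau_def P_def Tv_def)
  define N where "N = real CARD('n)"
  have Npos: "N > 0" by (simp add: N_def)
  have tb: "cmod (tau n \<alpha> \<zeta>) \<le> N * qq ^ n" for n
  proof -
    have "cmod (tau n \<alpha> \<zeta>) \<le> N * rs (Tp \<alpha> \<zeta>) ^ n" unfolding N_def by (rule tau_bound)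
    also have "\<dots> \<le> N * qq ^ n" using Om_props(1)[OF Om] rs_nonneg Npos
      unfolding \<zeta>_def by (intro mult_left_mono power_mono) auto
    finally show ?thesis .
  qed
  define e where "e n = (\<Sum>i\<in>I. mu i ^ n)" for n
  have Ee: "E 0 n = complex_of_real (e n)" for n by (simp add: E_def e_def)
  have mu_gt: "1 + mu i > 0" if "i \<in> I" for i using that cc_pos by (simp add: mu_def I_def)
  have mu_lt: "\<bar>mu i\<bar> < 1" if iI: "i \<in> I" for i
  proof (rule ccontr)
    assume "\<not> \<bar>mu i\<bar> < 1"
    hence m1: "\<bar>mu i\<bar> \<ge> 1" by simp
    have pos: "(1 + mu i) / (2 * N) > 0" using mu_gt[OF iI] Npos by simp
    obtain n where n: "qq ^ n < (1 + mu i) / (2 * N)" using real_arch_pow_inv[OF pos del_qq(3)] by blast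
    have "tau (2*n) \<alpha> \<zeta> + tau (2*n+1) \<alpha> \<zeta> = complex_of_real (e (2*n) + e (2*n+1))"
      by (simp add: tauE Ee)
    hence "\<bar>e (2*n) + e (2*n+1)\<bar> = cmod (tau (2*n) \<alpha> \<zeta> + tau (2*n+1) \<alpha> \<zeta>)"
      by (simp only: norm_of_real)
    also have "\<dots> \<le> cmod (tau (2*n) \<alpha> \<zeta>) + cmod (tau (2*n+1) \<alpha> \<zeta>)" by (rule norm_triangle_ineq)
    also have "\<dots> \<le> N * qq^(2*n) + N * qq^(2*n+1)" by (intro add_mono tb)
    also have "\<dots> \<le> 2 * N * qq ^ n"
    proof -
      have "qq^(2*n) \<le> qq^n" using del_qq(2,3) by (intro power_decreasing) auto
      moreover have "qq^(2*n+1) \<le> qq^n" using del_qq(2,3) power_decreasing[of n "2*n+1" qq] by simp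
      ultimately have "N * qq^(2*n) \<le> N * qq^n" "N * qq^(2*n+1) \<le> N * qq^n"
        using Npos by (auto intro: mult_left_mono)
      thus ?thesis by linarith
    qed
    also have "\<dots> < 1 + mu i" using n Npos by (simp add: field_simps)
    finally have A: "\<bar>e (2*n) + e (2*n+1)\<bar> < 1 + mu i" .
    have "e (2*n) + e (2*n+1) = (\<Sum>j\<in>I. mu j ^ (2*n) * (1 + mu j))"
      by (simp add: e_def sum.distrib[symmetric] algebra_simps)
    also have "\<dots> \<ge> mu i ^ (2*n) * (1 + mu i)"
    proof (rule member_le_sum)
      show "i \<in> I" by fact
      show "finite I" by simp
      fix j assume "j \<in> I - {i}"
      thus "0 \<le> mu j ^ (2*n) * (1 + mu j)" using mu_gt[of j] by (auto simp: power_mult less_imp_le)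
    qed
    finally have B: "mu i ^ (2*n) * (1 + mu i) \<le> e (2*n) + e (2*n+1)" .
    have "mu i ^ (2*n) \<ge> 1"
    proof -
      have "mu i ^ (2*n) = \<bar>mu i\<bar> ^ (2*n)" by (simp add: power_mult power2_abs)
      thus ?thesis using m1 by (simp add: one_le_power)
    qed
    hence "1 + mu i \<le> mu i ^ (2*n) * (1 + mu i)" using mu_gt[OF iI] by simp
    thus False using A B by linarith
  qed
  have \<delta>0: "\<delta> = 0"
  proof (rule ccontr)
    assume "\<delta> \<noteq> 0"
    hence dpos: "cmod \<delta> > 0" by simp
    have lim: "(\<lambda>n. N * qq ^ n + (\<Sum>i\<in>I. \<bar>mu i\<bar> ^ n)) \<longlonglongrightarrow> 0"
    proof -
      have "(\<lambda>n. N * qq ^ n) \<longlonglongrightarrow> N * 0"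
        using del_qq(2,3) by (intro tendsto_mult tendsto_const LIMSEQ_power_zero) auto
      moreover have "(\<lambda>n. \<Sum>i\<in>I. \<bar>mu i\<bar> ^ n) \<longlonglongrightarrow> (\<Sum>i\<in>I. 0)"
        using mu_lt by (intro tendsto_sum LIMSEQ_power_zero) auto
      ultimately show ?thesis using tendsto_add by fastforce
    qed
    then obtain n where n: "N * qq ^ n + (\<Sum>i\<in>I. \<bar>mu i\<bar> ^ n) < cmod \<delta>"
      using order_tendstoD(2)[OF lim dpos] by (auto simp: eventually_sequentially)
    have "cmod \<delta> = cmod (tau n \<alpha> \<zeta> - E 0 n)" by (simp add: tauE norm_mult norm_power)
    also have "\<dots> \<le> cmod (tau n \<alpha> \<zeta>) + cmod (E 0 n)" by (rule norm_triangle_ineq4)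
    also have "cmod (E 0 n) \<le> (\<Sum>i\<in>I. \<bar>mu i\<bar> ^ n)"
      unfolding Ee e_def norm_of_real by (rule order_trans[OF sum_abs]) (simp add: power_abs)
    finally show False using tb[of n] n by linarith
  qed
  have tau_e: "tau n \<alpha> \<zeta> = complex_of_real (e n)" for n by (simp add: tauE Ee \<delta>0)
  have bin: "(\<lambda>n. (w gchoose n) * mu i ^ n) sums ((cc * d i) powr w)" if "i \<in> I" for i
    using gen_binomial_real[OF mu_lt[OF that], of w] by (simp add: mu_def)
  have "(\<lambda>n. \<Sum>i\<in>I. (w gchoose n) * mu i ^ n) sums (\<Sum>i\<in>I. (cc * d i) powr w)"
    by (rule sums_sum) (rule bin)
  hence "(\<lambda>n. (w gchoose n) * e n) sums (\<Sum>i\<in>I. (cc * d i) powr w)"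
    by (simp add: e_def sum_distrib_left)
  hence "(\<lambda>n. complex_of_real ((w gchoose n) * e n)) sums complex_of_real (\<Sum>i\<in>I. (cc * d i) powr w)"
    by (simp only: sums_of_real_iff)
  moreover have "complex_of_real ((w gchoose n) * e n) = (\<zeta> gchoose n) * tau n \<alpha> \<zeta>" for n
    unfolding tau_e by (simp add: \<zeta>_def gbinomial_prod_rev)
  ultimately have PS: "PsiS \<alpha> \<zeta> = complex_of_real (\<Sum>i\<in>I. (cc * d i) powr w)"
    unfolding PsiS_def by (simp add: sums_iff)
  have "exp (- \<zeta> * of_real (ln cc)) = complex_of_real (cc powr (- w))"
    using cc_pos by (simp add: \<zeta>_def powr_def exp_of_real[symmetric])
  hence "Psi \<alpha> \<zeta> = complex_of_real (cc powr (- w) * (\<Sum>i\<in>I. (cc * d i) powr w))"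
    by (simp add: Psi_def PS)
  also have "cc powr (- w) * (\<Sum>i\<in>I. (cc * d i) powr w) = (\<Sum>i\<in>I. d i powr w)"
    using cc_pos dnn by (simp add: sum_distrib_left powr_mult powr_minus field_simps)
  finally have "Psi \<alpha> \<zeta> = complex_of_real (\<Sum>i\<in>I. d i powr w)" .
  moreover have "(\<Sum>i\<in>UNIV. if d i > 0 then complex_of_real (d i powr w) else 0) = complex_of_real (\<Sum>i\<in>I. d i powr w)"
    by (simp add: I_def sum.If_cases)
  ultimately show ?thesis by (simp add: \<zeta>_def)
qed

end


lemma cdiag_mv: "(cdiag f *v y) $ i = f i * y $ i"
  by (simp add: cdiag_def matrix_vector_mult_def)

lemma cnj_mult_self: "cnj z * z = complex_of_real ((cmod z)^2)"
  by (metis complex_norm_square mult.commute of_real_power)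

lemma cinner_cdiag: "cinner y (cdiag f *v y) = (\<Sum>i\<in>UNIV. f i * complex_of_real ((cmod (y$i))^2))"
  unfolding cinner_def cdiag_mv
  by (intro sum.cong refl) (simp only: cnj_mult_self[symmetric] mult_ac)

lemma psd_fc:
  assumes "\<And>x. f x = complex_of_real (g x)" "\<And>x. g x \<ge> 0"
  shows "psd (fc A f)"
proof -
  have h: "hermitian (fc A f)" using assms(1) by (intro fc_hermitian) simp
  have "0 \<le> Re (cinner x (fc A f *v x))" for x
  proof -
    have "cinner x (fc A f *v x) = cinner (adj (dU A) *v x) (cdiag (\<lambda>i. f (dd A i)) *v (adj (dU A) *v x))"
      by (simp add: fc_def cinner_adj matrix_vector_mul_assoc[symmetric])
    also have "\<dots> = (\<Sum>i\<in>UNIV. complex_of_real (g (dd A i) * (cmod ((adj (dU A) *v x)$i))^2))"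
      by (simp add: cinner_cdiag assms(1))
    finally show ?thesis using assms(2) by (simp add: sum_nonneg)
  qed
  thus ?thesis using h by (simp add: psd_def)
qed

lemma psd_sandwich:
  assumes hS: "hermitian S" and pR: "psd R"
  shows "psd (S ** R ** S)"
proof -
  have hR: "hermitian R" using pR by (simp add: psd_def)
  have "hermitian (S ** R ** S)"
    using hS hR by (simp add: hermitian_def adj_mult matrix_mul_assoc)
  moreover have "0 \<le> Re (cinner x ((S ** R ** S) *v x))" for x
  proof -
    have "cinner x ((S ** R ** S) *v x) = cinner (S *v x) (R *v (S *v x))"
      by (simp add: matrix_vector_mul_assoc[symmetric] hermitian_cinner[OF hS])
    thus ?thesis using pR by (simp add: psd_def)
  qed
  ultimately show ?thesis by (simp add: psd_def)
qed

lemma mpow_hermitian: "hermitian (mpow A p)"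
  by (simp only: mpow_cp cp_real_hermitian)

lemma trace_mp_fc: "hermitian A \<Longrightarrow> trace (mp A n) = (\<Sum>i\<in>UNIV. complex_of_real (dd A i) ^ n)"
proof -
  assume h: "hermitian A"
  have "mp A n = mp (fc A of_real) n" using fc_self[OF h] by simp
  also have "\<dots> = fc A (\<lambda>x. of_real x ^ n)" by (rule mp_fc[OF h])
  finally show ?thesis by (simp add: fc_trace[OF h])
qed

context qset
begin

definition Xm :: "real \<Rightarrow> real \<Rightarrow> complex^'n^'n" where
  "Xm \<alpha> w = mpow \<sigma> ((1 - \<alpha>) / (2 * w)) ** mpow \<rho> (\<alpha> / w) ** mpow \<sigma> ((1 - \<alpha>) / (2 * w))"

lemma Sg_mult: "Sg p ** Sg q = Sg (p + q)"
  unfolding Sg_def by (rule cp_mult[OF hs])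

lemma traceA:
  assumes Om: "(\<alpha>, complex_of_real w) \<in> Om"
  shows "trace (mpow (Xm \<alpha> w) w) = Psi \<alpha> (of_real w)"
proof -
  have w0: "w \<noteq> 0" using Om_props(2)[OF Om] by simp
  define a where "a = (1 - \<alpha>) / (2 * w)"
  define \<zeta> where "\<zeta> = complex_of_real w"
  define B where "B = bb \<alpha> \<zeta>"
  have ms: "mpow \<sigma> a = Sg (of_real a)" by (simp add: mpow_cp Sg_def)
  have mr: "mpow \<rho> (\<alpha> / w) = Rh B ** Rh B"
    using w0 by (simp add: mpow_cp Rh_def[symmetric] Rh_mult B_def bb_def \<zeta>_def field_simps)
  have X: "Xm \<alpha> w = (Sg (of_real a) ** Rh B) ** (Rh B ** Sg (of_real a))"
    by (simp add: Xm_def a_def[symmetric] ms mr matrix_mul_assoc)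
  have aa_eq: "2 * aa \<alpha> \<zeta> = of_real a + of_real a"
    using w0 by (simp add: aa_def a_def \<zeta>_def field_simps)
  have SS: "Sg (2 * aa \<alpha> \<zeta>) = Sg (of_real a) ** Sg (of_real a)" by (simp only: Sg_mult aa_eq)
  have Yv: "Y \<alpha> \<zeta> = (Rh B ** Sg (of_real a)) ** (Sg (of_real a) ** Rh B)"
    by (simp only: Y_def B_def SS matrix_mul_assoc)
  have pX: "psd (Xm \<alpha> w)"
  proof -
    have "psd (mpow \<rho> (\<alpha> / w))" unfolding mpow_fc
      by (rule psd_fc[where g = "\<lambda>x. if x > 0 then x powr (\<alpha> / w) else 0"]) auto
    thus ?thesis unfolding Xm_def by (intro psd_sandwich mpow_hermitian)
  qed
  have hX: "hermitian (Xm \<alpha> w)" using pX by (simp add: psd_def)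
  define d where "d = dd (Xm \<alpha> w)"
  have dnn: "d i \<ge> 0" for i unfolding d_def by (rule dd_nonneg[OF pX])
  have pw: "trace (mp (Y \<alpha> (of_real w)) (Suc k)) = (\<Sum>i\<in>UNIV. complex_of_real (d i) ^ Suc k)" for k
  proof -
    have "trace (mp (Y \<alpha> (of_real w)) (Suc k)) = trace (mp (Xm \<alpha> w) (Suc k))"
      unfolding \<zeta>_def[symmetric] X Yv by (rule trace_mp_cyclic[symmetric])
    also have "\<dots> = (\<Sum>i\<in>UNIV. complex_of_real (d i) ^ Suc k)"
      unfolding d_def by (rule trace_mp_fc[OF hX])
    finally show ?thesis .
  qed
  have "trace (mpow (Xm \<alpha> w) w) = (\<Sum>i\<in>UNIV. if d i > 0 then complex_of_real (d i powr w) else 0)"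
    unfolding mpow_fc d_def by (rule fc_trace[OF hX])
  also have "\<dots> = Psi \<alpha> (of_real w)" by (rule ident[OF Om dnn pw])
  finally show ?thesis .
qed

lemma Psi1:
  assumes Om: "(1, complex_of_real w) \<in> Om"
  shows "Psi 1 (of_real w) = 1"
proof -
  have w0: "w \<noteq> 0" using Om_props(2)[OF Om] by simp
  define d where "d i = (if r i > 0 then r i powr (1 / w) else 0)" for i
  have dnn: "d i \<ge> 0" for i by (simp add: d_def)
  have ex: "exp (complex_of_real (ln (r i)) / complex_of_real w) = complex_of_real (r i powr (1 / w))"
    if "r i > 0" for i
  proof -
    have e00: "r i powr (1 / w) = exp ((1 / w) * ln (r i))" using that by (simp add: powr_def)
    have e0: "r i powr (1 / w) = exp (ln (r i) / w)" unfolding e00 by simp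
    show ?thesis unfolding e0 by (metis of_real_divide exp_of_real)
  qed
  have pw: "trace (mp (Y 1 (of_real w)) (Suc k)) = (\<Sum>i\<in>UNIV. complex_of_real (d i) ^ Suc k)" for k
  proof -
    have "Y 1 (of_real w) = Rh (1 / of_real w)" by (rule Y1) (simp add: w0)
    hence "mp (Y 1 (of_real w)) (Suc k) = mp (fc \<rho> (\<lambda>x. if x > 0 then exp (1 / complex_of_real w * of_real (ln x)) else 0)) (Suc k)"
      by (simp only: Rh_def cp_def)
    also have "\<dots> = fc \<rho> (\<lambda>x. (if x > 0 then exp (1 / complex_of_real w * of_real (ln x)) else 0) ^ Suc k)"
      by (rule mp_fc[OF hr])
    finally have "mp (Y 1 (of_real w)) (Suc k) = fc \<rho> (\<lambda>x. (if x > 0 then exp (1 / complex_of_real w * of_real (ln x)) else 0) ^ Suc k)" .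
    hence "trace (mp (Y 1 (of_real w)) (Suc k)) = (\<Sum>i\<in>UNIV. (if r i > 0 then exp (1 / complex_of_real w * of_real (ln (r i))) else 0) ^ Suc k)"
      by (simp add: fc_trace[OF hr])
    also have "\<dots> = (\<Sum>i\<in>UNIV. complex_of_real (d i) ^ Suc k)"
      by (intro sum.cong refl) (simp add: d_def ex)
    finally show ?thesis .
  qed
  have "Psi 1 (of_real w) = (\<Sum>i\<in>UNIV. if d i > 0 then complex_of_real (d i powr w) else 0)"
    by (rule ident[OF Om dnn pw, symmetric])
  also have "\<dots> = (\<Sum>i\<in>UNIV. complex_of_real (r i))"
  proof (intro sum.cong refl)
    fix i
    show "(if d i > 0 then complex_of_real (d i powr w) else 0) = complex_of_real (r i)"
    proof (cases "r i > 0")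
      case True
      hence "d i powr w = r i" using w0 by (simp add: d_def powr_powr)
      thus ?thesis using True by (simp add: d_def)
    next
      case False
      hence "r i = 0" using r_nonneg[of i] by simp
      thus ?thesis by (simp add: d_def)
    qed
  qed
  also have "\<dots> = 1" using sum_r by (metis of_real_1 of_real_sum)
  finally show ?thesis .
qed

end


context qset
begin

lemma inOm: "\<bar>\<alpha> - 1\<bar> \<le> del \<Longrightarrow> \<bar>w - z\<bar> \<le> del \<Longrightarrow> (\<alpha>, complex_of_real w) \<in> Om"
  by (simp add: Om_iff norm_of_real[symmetric] of_real_diff[symmetric] del: of_real_diff)

lemma deriv_Psi:
  assumes a: "\<bar>\<alpha> - 1\<bar> \<le> del"
  shows "((\<lambda>w. Psi \<alpha> (of_real w)) has_vector_derivative deriv (Psi \<alpha>) (of_real z)) (at z)"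
    "Psi \<alpha> field_differentiable (at (of_real z))"
proof -
  have "Psi \<alpha> holomorphic_on ball (of_real z) del" using holo_Psi(1)[OF a] by simp
  thus fd: "Psi \<alpha> field_differentiable (at (of_real z))"
    using del_qq(1) by (intro holomorphic_on_imp_differentiable_at) auto
  hence "(Psi \<alpha> has_field_derivative deriv (Psi \<alpha>) (of_real z)) (at (of_real z))"
    by (simp add: DERIV_deriv_iff_field_differentiable)
  thus "((\<lambda>w. Psi \<alpha> (of_real w)) has_vector_derivative deriv (Psi \<alpha>) (of_real z)) (at z)"
    by (rule has_vector_derivative_real_field)
qed

lemma final:
  "\<exists>D :: real \<Rightarrow> complex.
    (\<forall>\<^sub>F \<alpha> in at 1.
       ((\<lambda>w. trace (mpow (mpow \<sigma> ((1 - \<alpha>) / (2 * w)) ** mpow \<rho> (\<alpha> / w)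
                           ** mpow \<sigma> ((1 - \<alpha>) / (2 * w))) w))
         has_vector_derivative D \<alpha>) (at z))
    \<and> (D \<longlongrightarrow> 0) (at 1)"
proof -
  define z0 where "z0 = complex_of_real z"
  define D where "D \<alpha> = deriv (Psi \<alpha>) z0" for \<alpha>
  have dpos: "del > 0" using del_qq(1) .
  have ballS: "y \<in> ball z del \<Longrightarrow> \<bar>y - z\<bar> \<le> del" for y by (simp add: dist_norm abs_minus_commute)
  have hv: "((\<lambda>w. trace (mpow (mpow \<sigma> ((1 - \<alpha>) / (2 * w)) ** mpow \<rho> (\<alpha> / w)
                           ** mpow \<sigma> ((1 - \<alpha>) / (2 * w))) w)) has_vector_derivative D \<alpha>) (at z)"
    if a: "\<bar>\<alpha> - 1\<bar> \<le> del" for \<alpha>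
  proof (rule has_vector_derivative_transform_within_open[OF _ open_ball])
    show "((\<lambda>w. Psi \<alpha> (of_real w)) has_vector_derivative D \<alpha>) (at z)"
      unfolding D_def z0_def by (rule deriv_Psi(1)[OF a])
    show "z \<in> ball z del" using dpos by simp
    fix y assume "y \<in> ball z del"
    hence "(\<alpha>, complex_of_real y) \<in> Om" using inOm[OF a ballS] by blast
    thus "Psi \<alpha> (of_real y) = trace (mpow (mpow \<sigma> ((1 - \<alpha>) / (2 * y)) ** mpow \<rho> (\<alpha> / y)
                           ** mpow \<sigma> ((1 - \<alpha>) / (2 * y))) y)"
      using traceA by (simp add: Xm_def)
  qed
  have ev: "\<forall>\<^sub>F \<alpha> in at 1. ((\<lambda>w. trace (mpow (mpow \<sigma> ((1 - \<alpha>) / (2 * w)) ** mpow \<rho> (\<alpha> / w)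
                           ** mpow \<sigma> ((1 - \<alpha>) / (2 * w))) w)) has_vector_derivative D \<alpha>) (at z)"
    unfolding eventually_at using dpos by (intro exI[of _ del]) (auto intro!: hv simp: dist_norm)
  have D1: "D 1 = 0"
  proof -
    have a: "((\<lambda>w. Psi 1 (of_real w)) has_vector_derivative D 1) (at z)"
      unfolding D_def z0_def by (rule deriv_Psi(1)) (simp add: less_imp_le dpos)
    have b: "((\<lambda>w. Psi 1 (of_real w)) has_vector_derivative 0) (at z)"
    proof (rule has_vector_derivative_transform_within_open[OF _ open_ball])
      show "((\<lambda>w. 1) has_vector_derivative 0) (at z)" by (rule has_vector_derivative_const)
      show "z \<in> ball z del" using dpos by simp
      fix y assume "y \<in> ball z del"
      hence "(1, complex_of_real y) \<in> Om" using inOm[of 1 y] ballS dpos by simp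
      thus "1 = Psi 1 (of_real y)" using Psi1 by simp
    qed
    show ?thesis using vector_derivative_unique_at[OF a b] .
  qed
  have lim: "(D \<longlongrightarrow> 0) (at 1)"
  proof (rule tendstoI)
    fix e :: real assume e: "e > 0"
    have uc: "uniformly_continuous_on Om (\<lambda>p. Psi (fst p) (snd p))"
      by (rule compact_uniformly_continuous[OF cont_Psi compact_Om])
    obtain \<eta> where \<eta>: "\<eta> > 0" and \<eta>P: "\<And>x x'. x \<in> Om \<Longrightarrow> x' \<in> Om \<Longrightarrow> dist x' x < \<eta> \<Longrightarrow>
        dist (Psi (fst x') (snd x')) (Psi (fst x) (snd x)) < e * del / 2"
      using uc[unfolded uniformly_continuous_on_def, rule_format, of "e * del / 2"] e dpos by auto
    have "dist (D \<alpha>) 0 < e" if a0: "\<alpha> \<noteq> 1" and a1: "dist \<alpha> 1 < min \<eta> del" for \<alpha>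
    proof -
      have a: "\<bar>\<alpha> - 1\<bar> \<le> del" using a1 by (simp add: dist_norm)
      have one: "\<bar>(1::real) - 1\<bar> \<le> del" using dpos by simp
      define g where "g \<zeta> = Psi \<alpha> \<zeta> - Psi 1 \<zeta>" for \<zeta>
      have hg: "g holomorphic_on ball z0 del" unfolding g_def z0_def
        using holo_Psi(1)[OF a] holo_Psi(1)[OF one] by (intro holomorphic_intros) auto
      have cg: "continuous_on (cball z0 del) g" unfolding g_def z0_def
        using holo_Psi(2)[OF a] holo_Psi(2)[OF one] by (intro continuous_intros) auto
      have bnd: "norm (g \<zeta>) \<le> e * del / 2" if "norm (z0 - \<zeta>) = del" for \<zeta>
      proof -
        have in1: "(\<alpha>, \<zeta>) \<in> Om" "(1, \<zeta>) \<in> Om" using that a dpos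
          by (auto simp: Om_iff z0_def norm_minus_commute)
        have "dist (\<alpha>, \<zeta>) (1, \<zeta>) = dist \<alpha> 1" by (simp add: dist_Pair_Pair)
        hence "dist (\<alpha>, \<zeta>) (1, \<zeta>) < \<eta>" using a1 by simp
        from \<eta>P[OF in1(2) in1(1) this] show ?thesis by (simp add: g_def dist_norm)
      qed
      have "norm ((deriv ^^ 1) g z0) \<le> fact 1 * (e * del / 2) / del ^ 1"
        by (rule Cauchy_inequality[OF hg cg dpos bnd])
      hence "norm (deriv g z0) \<le> e / 2" using dpos by simp
      moreover have "deriv g z0 = D \<alpha> - D 1"
        unfolding g_def D_def z0_def using deriv_Psi(2)[OF a] deriv_Psi(2)[OF one]
        by (simp add: deriv_diff)
      ultimately show ?thesis using D1 e by (simp add: dist_norm)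
    qed
    thus "\<forall>\<^sub>F \<alpha> in at 1. dist (D \<alpha>) 0 < e"
      unfolding eventually_at using \<eta> dpos by (intro exI[of _ "min \<eta> del"]) auto
  qed
  show ?thesis using ev lim by blast
qed

end

theorem proposition2:
  fixes \<rho> \<sigma> :: "complex^'n^'n" and z :: real
  assumes "density_operator \<rho>" and "psd \<sigma>" and "ker \<sigma> \<subseteq> ker \<rho>" and "z \<noteq> 0"
  shows "\<exists>D :: real \<Rightarrow> complex.
    (\<forall>\<^sub>F \<alpha> in at 1.
       ((\<lambda>w. trace (mpow (mpow \<sigma> ((1 - \<alpha>) / (2 * w)) ** mpow \<rho> (\<alpha> / w)
                           ** mpow \<sigma> ((1 - \<alpha>) / (2 * w))) w))
         has_vector_derivative D \<alpha>) (at z))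
    \<and> (D \<longlongrightarrow> 0) (at 1)"
proof -
  interpret q: qset \<sigma> \<rho> z using assms by unfold_locales
  show ?thesis by (rule q.final)
qed


end
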